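(* Let $G_0=\mathrm{Aut}(\tilde{\mathbf O})$ (the split real form of $G_2$), acting on $\mathrm{Im}\,\tilde{\mathbf O}=(\mathbb R\cdot1)^\perp\cong\mathbb R^{3,4}$ and hence complex-linearly on $(\mathrm{Im}\,\tilde{\mathbf O})_{\mathbb C}\cong\mathbb C^7$. Let $Z$ be the quadric of isotropic lines in $(\mathrm{Im}\,\tilde{\mathbf O})_{\mathbb C}$ for the complex-bilinear extension $(\cdot,\cdot)_{\mathbb C}$ of the norm form, and let $D_+$ (resp. $D_-$) be the set of lines $\mathbb C z\in Z$ with $\langle z,z\rangle>0$ (resp. $<0$), where $\langle w,z\rangle=(w,\bar z)_{\mathbb C}$. Then $D_\pm$ are the two open $SO_e(3,4)$-orbits in $Z$, and $G_0$ acts transitively on each of $D_+$ and $D_-$.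
   Context: $\tilde{\mathbf O}$ is the split octonion algebra over $\mathbb R$ with norm form whose polarization $(\cdot,\cdot)$ has signature $(4,4)$ and $(1,1)=1$; automorphisms preserve $(\cdot,\cdot)$ and $\mathrm{Im}\,\tilde{\mathbf O}$, giving $G_0\subset SO_e(3,4)$. Bar denotes complex conjugation of $(\mathrm{Im}\,\tilde{\mathbf O})_{\mathbb C}=\mathrm{Im}\,\tilde{\mathbf O}+i\,\mathrm{Im}\,\tilde{\mathbf O}$. *)

theory Defs
  imports "HOL-Analysis.Analysis"
begin

type_synonym quat = "real \<times> real \<times> real \<times> real"
type_synonym soct = "quat \<times> quat"

fun qmult :: "quat \<Rightarrow> quat \<Rightarrow> quat" where
  "qmult (a0,a1,a2,a3) (b0,b1,b2,b3) =
     (a0*b0 - a1*b1 - a2*b2 - a3*b3,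
      a0*b1 + a1*b0 + a2*b3 - a3*b2,
      a0*b2 - a1*b3 + a2*b0 + a3*b1,
      a0*b3 + a1*b2 - a2*b1 + a3*b0)"

fun qconj :: "quat \<Rightarrow> quat" where
  "qconj (a0,a1,a2,a3) = (a0, -a1, -a2, -a3)"

text \<open>Split octonions via Cayley-Dickson doubling of the quaternions with
  parameter +1: (a,b)(c,d) = (ac + conj(d) b, da + b conj(c)).\<close>
fun omult :: "soct \<Rightarrow> soct \<Rightarrow> soct" where
  "omult (a,b) (c,d) = (qmult a c + qmult (qconj d) b, qmult d a + qmult b (qconj c))"

definition one_o :: soct where "one_o = ((1,0,0,0),(0,0,0,0))"

text \<open>Norm form N(a,b) = |a|^2 - |b|^2 (= x * conj x), signature (4,4).\<close>
definition onorm :: "soct \<Rightarrow> real" where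
  "onorm x = (fst x \<bullet> fst x) - (snd x \<bullet> snd x)"

definition B :: "soct \<Rightarrow> soct \<Rightarrow> real" where
  "B x y = (onorm (x + y) - onorm x - onorm y) / 2"

definition ImO :: "soct set" where "ImO = {x. B x one_o = 0}"

text \<open>Complexification of Im O: a pair (u,v) stands for u + i v.\<close>
definition ImC :: "(soct \<times> soct) set" where
  "ImC = {(u,v). u \<in> ImO \<and> v \<in> ImO}"

definition cscale :: "complex \<Rightarrow> soct \<times> soct \<Rightarrow> soct \<times> soct" where
  "cscale c z = (Re c *\<^sub>R fst z - Im c *\<^sub>R snd z, Re c *\<^sub>R snd z + Im c *\<^sub>R fst z)"

definition bilC :: "soct \<times> soct \<Rightarrow> soct \<times> soct \<Rightarrow> complex" where
  "bilC w z = Complex (B (fst w) (fst z) - B (snd w) (snd z))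
                      (B (fst w) (snd z) + B (snd w) (fst z))"

definition conjC :: "soct \<times> soct \<Rightarrow> soct \<times> soct" where
  "conjC z = (fst z, - snd z)"

definition herm :: "soct \<times> soct \<Rightarrow> soct \<times> soct \<Rightarrow> complex" where
  "herm w z = bilC w (conjC z)"

definition cline :: "soct \<times> soct \<Rightarrow> (soct \<times> soct) set" where
  "cline z = range (\<lambda>c. cscale c z)"

definition isocone :: "(soct \<times> soct) set" where
  "isocone = {z \<in> ImC. z \<noteq> 0 \<and> bilC z z = 0}"

definition Zq :: "(soct \<times> soct) set set" where
  "Zq = cline ` isocone"

definition Dplus :: "(soct \<times> soct) set set" where
  "Dplus = {cline z | z. z \<in> isocone \<and> Re (herm z z) > 0}"

definition Dminus :: "(soct \<times> soct) set set" where
  "Dminus = {cline z | z. z \<in> isocone \<and> Re (herm z z) < 0}"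

definition openZ :: "(soct \<times> soct) set set \<Rightarrow> bool" where
  "openZ U \<longleftrightarrow> U \<subseteq> Zq \<and> openin (top_of_set isocone) {z \<in> isocone. cline z \<in> U}"

text \<open>O(Im O) realized as B-isometries of O fixing 1 (equivalently, of Im O);
  SO_e(3,4) is its identity component (pointwise = norm topology).\<close>
definition Ogrp :: "(soct \<Rightarrow> soct) set" where
  "Ogrp = {g. linear g \<and> bij g \<and> g one_o = one_o \<and> (\<forall>x y. B (g x) (g y) = B x y)}"

definition SOe :: "(soct \<Rightarrow> soct) set" where
  "SOe = path_component_set Ogrp id"

definition G0 :: "(soct \<Rightarrow> soct) set" where
  "G0 = {g. linear g \<and> bij g \<and> (\<forall>x y. g (omult x y) = omult (g x) (g y))}"

definition actL :: "(soct \<Rightarrow> soct) \<Rightarrow> (soct \<times> soct) set \<Rightarrow> (soct \<times> soct) set" where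
  "actL g L = (\<lambda>z. (g (fst z), g (snd z))) ` L"

definition orbit :: "(soct \<Rightarrow> soct) set \<Rightarrow> (soct \<times> soct) set \<Rightarrow> (soct \<times> soct) set set" where
  "orbit H L = {actL g L | g. g \<in> H}"

definition orbitsZ :: "(soct \<Rightarrow> soct) set \<Rightarrow> (soct \<times> soct) set set set" where
  "orbitsZ H = orbit H ` Zq"

end

theory Submission
  imports Defs
begin

lemma soct_ex: obtains a0 a1 a2 a3 b0 b1 b2 b3 where "x = ((a0,a1,a2,a3),(b0,b1,b2,b3))"
  by (metis prod.exhaust)

lemma B_inner: "B x y = fst x \<bullet> fst y - snd x \<bullet> snd y"
  by (simp add: B_def onorm_def inner_add_left inner_add_right inner_commute field_simps)

lemma onorm_B: "onorm x = B x x"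
  by (simp add: B_inner onorm_def)

lemma B_coord: "B ((a0,a1,a2,a3),(b0,b1,b2,b3)) ((c0,c1,c2,c3),(d0,d1,d2,d3)) =
  a0*c0+a1*c1+a2*c2+a3*c3 - b0*d0 - b1*d1 - b2*d2 - b3*d3"
  by (simp add: B_inner)

lemma B_sym: "B x y = B y x"
  by (simp add: B_inner inner_commute)

lemma B_add_left: "B (x + y) z = B x z + B y z"
  and B_add_right: "B z (x + y) = B z x + B z y"
  and B_diff_left: "B (x - y) z = B x z - B y z"
  and B_diff_right: "B z (x - y) = B z x - B z y"
  and B_minus_left: "B (- x) z = - B x z"
  and B_minus_right: "B z (- x) = - B z x"
  and B_scale_left: "B (r *\<^sub>R x) z = r * B x z"
  and B_scale_right: "B z (r *\<^sub>R x) = r * B z x"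
  and B_zero_left: "B 0 z = 0"
  and B_zero_right: "B z 0 = 0"
  by (simp_all add: B_inner inner_add_left inner_add_right inner_diff_left inner_diff_right algebra_simps)

lemmas B_simps = B_add_left B_add_right B_diff_left B_diff_right B_minus_left B_minus_right
  B_scale_left B_scale_right B_zero_left B_zero_right

lemma one_o_coord: "one_o = ((1,0,0,0),(0,0,0,0))" by (simp add: one_o_def)

lemma B_one: "B one_o one_o = 1" by (simp add: one_o_def B_coord)

lemma ImO_coord: "((a0,a1,a2,a3),(b0,b1,b2,b3)) \<in> ImO \<longleftrightarrow> a0 = 0"
  by (simp add: ImO_def one_o_def B_coord)

lemma ImO_add: "x \<in> ImO \<Longrightarrow> y \<in> ImO \<Longrightarrow> x + y \<in> ImO"
  and ImO_diff: "x \<in> ImO \<Longrightarrow> y \<in> ImO \<Longrightarrow> x - y \<in> ImO"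
  and ImO_scale: "x \<in> ImO \<Longrightarrow> r *\<^sub>R x \<in> ImO"
  and ImO_minus: "x \<in> ImO \<Longrightarrow> - x \<in> ImO"
  and ImO_zero: "0 \<in> ImO"
  by (simp_all add: ImO_def B_simps)

lemma omult_one_right: "omult x one_o = x"
  by (cases x rule: soct_ex) (simp add: one_o_def)

lemma omult_one_left: "omult one_o x = x"
  by (cases x rule: soct_ex) (simp add: one_o_def)

lemma omult_sq: "omult x x = (2 * B x one_o) *\<^sub>R x - onorm x *\<^sub>R one_o"
  by (cases x rule: soct_ex) (simp add: one_o_def onorm_B B_coord algebra_simps power2_eq_square)

lemma onorm_decomp: "y \<in> ImO \<Longrightarrow> onorm (a *\<^sub>R one_o + y) = a^2 + onorm y"
  by (simp add: onorm_B B_simps ImO_def B_one B_sym[of one_o y] power2_eq_square algebra_simps)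

section \<open>G0 is contained in Ogrp\<close>

lemma G0_D: assumes "g \<in> G0" shows "linear g" "bij g" "\<And>x y. g (omult x y) = omult (g x) (g y)"
  using assms by (auto simp: G0_def)

lemma G0_one: assumes "g \<in> G0" shows "g one_o = one_o"
proof -
  from G0_D[OF assms] obtain y where y: "g y = one_o" by (metis bij_pointE)
  have "g y = g (omult one_o y)" by (simp add: omult_one_left)
  also have "\<dots> = omult (g one_o) (g y)" using G0_D[OF assms] by simp
  also have "\<dots> = g one_o" by (simp add: y omult_one_right)
  finally show ?thesis using y by simp
qed

lemma G0_ImO: assumes "g \<in> G0" "x \<in> ImO" shows "g x \<in> ImO \<and> onorm (g x) = onorm x"
proof -
  have lin: "linear g" and inj: "inj g" using G0_D[OF assms(1)] bij_is_inj by auto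
  have x0: "B x one_o = 0" using assms(2) by (simp add: ImO_def)
  define y where "y = g x"
  define t where "t = B y one_o"
  have "omult y y = g (omult x x)" using G0_D[OF assms(1)] by (simp add: y_def)
  also have "\<dots> = g (- onorm x *\<^sub>R one_o)" by (simp add: omult_sq x0)
  also have "\<dots> = - onorm x *\<^sub>R one_o" using linear_scale[OF lin] linear_neg[OF lin] G0_one[OF assms(1)] by simp
  finally have e1: "omult y y = - onorm x *\<^sub>R one_o" .
  have e2: "(2*t) *\<^sub>R y = (onorm y - onorm x) *\<^sub>R one_o"
    using e1 omult_sq[of y] by (simp add: t_def algebra_simps)
  have t0: "t = 0"
  proof (rule ccontr)
    assume tn: "t \<noteq> 0"
    define lam where "lam = (onorm y - onorm x) / (2*t)"
    have "y = (1/(2*t)) *\<^sub>R ((2*t) *\<^sub>R y)" using tn by simp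
    also have "\<dots> = lam *\<^sub>R one_o" using e2 by (simp add: lam_def)
    finally have yl: "y = lam *\<^sub>R one_o" .
    have "g (lam *\<^sub>R one_o) = lam *\<^sub>R one_o" using linear_scale[OF lin] G0_one[OF assms(1)] by simp
    hence "g x = g (lam *\<^sub>R one_o)" using yl y_def by simp
    hence "x = lam *\<^sub>R one_o" using inj by (simp add: inj_eq)
    hence "lam = 0" using x0 by (simp add: B_simps B_one)
    hence "y = 0" using yl by simp
    hence "t = 0" by (simp add: t_def B_simps)
    with tn show False by simp
  qed
  have "(onorm y - onorm x) *\<^sub>R one_o = 0" using e2 t0 by simp
  hence "onorm y = onorm x" by (simp add: one_o_def zero_prod_def)
  thus ?thesis using t0 by (simp add: ImO_def y_def t_def)
qed

lemma G0_onorm: assumes "g \<in> G0" shows "onorm (g x) = onorm x"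
proof -
  have lin: "linear g" using G0_D[OF assms] by simp
  define a where "a = B x one_o"
  define y where "y = x - a *\<^sub>R one_o"
  have yI: "y \<in> ImO" by (simp add: ImO_def y_def a_def B_simps B_one)
  have xd: "x = a *\<^sub>R one_o + y" by (simp add: y_def)
  have "g x = a *\<^sub>R one_o + g y"
    using xd linear_add[OF lin] linear_scale[OF lin] G0_one[OF assms] by metis
  hence "onorm (g x) = a^2 + onorm (g y)" using onorm_decomp G0_ImO[OF assms yI] by simp
  also have "\<dots> = onorm x" using G0_ImO[OF assms yI] onorm_decomp[OF yI] xd by simp
  finally show ?thesis .
qed

lemma G0_B: assumes "g \<in> G0" shows "B (g x) (g y) = B x y"
proof -
  have lin: "linear g" using G0_D[OF assms] by simp
  have "g x + g y = g (x + y)" using linear_add[OF lin] by simp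
  thus ?thesis unfolding B_def by (simp add: G0_onorm[OF assms])
qed

lemma G0_Ogrp: "G0 \<subseteq> Ogrp"
  using G0_D G0_one G0_B unfolding Ogrp_def by blast

lemma cscale_pair: "cscale c (u,v) = (Re c *\<^sub>R u - Im c *\<^sub>R v, Re c *\<^sub>R v + Im c *\<^sub>R u)"
  by (simp add: cscale_def)

lemma cscale_cscale: "cscale c (cscale d z) = cscale (c*d) z"
  by (simp add: cscale_def algebra_simps scaleR_add_right scaleR_diff_right prod_eq_iff)

lemma cscale_one: "cscale 1 z = z"
  by (simp add: cscale_def)

lemma cscale_zero: "cscale 0 z = 0"
  by (simp add: cscale_def prod_eq_iff)

lemma cscale_nz: assumes "c \<noteq> 0" "z \<noteq> 0" shows "cscale c z \<noteq> 0"
proof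
  assume "cscale c z = 0"
  hence "cscale (inverse c) (cscale c z) = 0"
    by (simp add: cscale_def zero_prod_def)
  thus False using assms by (simp add: cscale_cscale cscale_one)
qed

lemma in_cline: "z \<in> cline z"
  unfolding cline_def by (metis cscale_one rangeI)

lemma cline_cscale: assumes "c \<noteq> 0" shows "cline (cscale c z) = cline z"
proof -
  have "cline (cscale c z) \<subseteq> cline z" unfolding cline_def by (auto simp: cscale_cscale)
  moreover have "cline z \<subseteq> cline (cscale c z)"
  proof
    fix w assume "w \<in> cline z"
    then obtain d where "w = cscale d z" by (auto simp: cline_def)
    hence "w = cscale (d / c) (cscale c z)" using assms by (simp add: cscale_cscale)
    thus "w \<in> cline (cscale c z)" by (simp add: cline_def)
  qed
  ultimately show ?thesis by blast
qed

lemma cline_eqD: assumes "cline z = cline w" shows "\<exists>c. z = cscale c w"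
  using in_cline[of z] assms by (auto simp: cline_def)

lemma bilC_self: "bilC z z = Complex (onorm (fst z) - onorm (snd z)) (2 * B (fst z) (snd z))"
  by (simp add: bilC_def onorm_B B_sym[of "snd z" "fst z"])

lemma herm_self: "herm z z = Complex (onorm (fst z) + onorm (snd z)) 0"
  by (simp add: herm_def bilC_def conjC_def onorm_B B_simps B_sym[of "snd z" "fst z"])

lemma isocone_iff: "z \<in> isocone \<longleftrightarrow> fst z \<in> ImO \<and> snd z \<in> ImO \<and> z \<noteq> 0 \<and>
   onorm (fst z) = onorm (snd z) \<and> B (fst z) (snd z) = 0"
  by (cases z rule: prod.exhaust) (auto simp: isocone_def ImC_def bilC_self complex_eq_iff)

lemma herm_cscale: "Re (herm (cscale c z) (cscale c z)) = (cmod c)^2 * Re (herm z z)"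
proof -
  have "(cmod c)^2 = Re c * Re c + Im c * Im c" using cmod_power2[of c] by (simp add: power2_eq_square)
  thus ?thesis by (simp add: herm_self cscale_def onorm_B B_simps B_sym[of "snd z" "fst z"] algebra_simps)
qed

lemma isocone_cscale: assumes "z \<in> isocone" "c \<noteq> 0" shows "cscale c z \<in> isocone"
proof -
  obtain u v where z: "z = (u,v)" by (cases z rule: prod.exhaust)
  have "onorm u = onorm v" "B u v = 0" "u \<in> ImO" "v \<in> ImO" "z \<noteq> 0" using assms by (auto simp: isocone_iff z)
  moreover have "cscale c z \<noteq> 0" using cscale_nz[OF assms(2)] assms(1) by (auto simp: isocone_def)
  ultimately show ?thesis unfolding isocone_iff z
    by (simp add: cscale_def ImO_add ImO_diff ImO_scale onorm_B B_simps B_sym[of v u] algebra_simps)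
qed

lemma herm_cline: assumes "z \<in> isocone" "w \<in> isocone" "cline z = cline w"
  shows "Re (herm z z) > 0 \<longleftrightarrow> Re (herm w w) > 0" "Re (herm z z) < 0 \<longleftrightarrow> Re (herm w w) < 0"
    "Re (herm z z) = 0 \<longleftrightarrow> Re (herm w w) = 0"
proof -
  obtain c where c: "z = cscale c w" using cline_eqD[OF assms(3)] by blast
  have "c \<noteq> 0" using assms(1) c cscale_zero[of w] by (auto simp: isocone_def)
  hence p: "(cmod c)^2 > 0" by simp
  have h: "Re (herm z z) = (cmod c)^2 * Re (herm w w)" by (simp add: c herm_cscale)
  show "Re (herm z z) > 0 \<longleftrightarrow> Re (herm w w) > 0" "Re (herm z z) < 0 \<longleftrightarrow> Re (herm w w) < 0"
    "Re (herm z z) = 0 \<longleftrightarrow> Re (herm w w) = 0"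
    using p unfolding h by (auto simp: zero_less_mult_iff mult_less_0_iff)
qed

lemma Dplus_iff: assumes "z \<in> isocone" shows "cline z \<in> Dplus \<longleftrightarrow> Re (herm z z) > 0"
  using herm_cline[OF assms] assms unfolding Dplus_def by blast

lemma Dminus_iff: assumes "z \<in> isocone" shows "cline z \<in> Dminus \<longleftrightarrow> Re (herm z z) < 0"
  using herm_cline[OF assms] assms unfolding Dminus_def by blast

definition gg :: "(soct \<Rightarrow> soct) \<Rightarrow> soct \<times> soct \<Rightarrow> soct \<times> soct" where
  "gg g z = (g (fst z), g (snd z))"

lemma actL_gg: "actL g L = gg g ` L"
  by (simp add: actL_def gg_def)

lemma Ogrp_D: assumes "g \<in> Ogrp" shows "linear g" "bij g" "g one_o = one_o" "\<And>x y. B (g x) (g y) = B x y"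
  using assms by (auto simp: Ogrp_def)

lemma Ogrp_ImO: assumes "g \<in> Ogrp" "x \<in> ImO" shows "g x \<in> ImO"
  using assms Ogrp_D[OF assms(1)] by (simp add: ImO_def) (metis)

lemma gg_cscale: assumes "linear g" shows "gg g (cscale c z) = cscale c (gg g z)"
  using assms by (simp add: gg_def cscale_def linear_diff linear_add linear_scale)

lemma actL_cline: assumes "linear g" shows "actL g (cline z) = cline (gg g z)"
  unfolding actL_gg cline_def using gg_cscale[OF assms] by (auto simp: image_image)

lemma Ogrp_isocone: assumes "g \<in> Ogrp" "z \<in> isocone" shows "gg g z \<in> isocone"
proof -
  have inj: "inj g" using Ogrp_D(2)[OF assms(1)] bij_is_inj by auto
  have l: "linear g" using Ogrp_D[OF assms(1)] by simp
  have "gg g z \<noteq> 0"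
  proof
    assume "gg g z = 0"
    hence "g (fst z) = g 0" "g (snd z) = g 0" using linear_0[OF l] by (auto simp: gg_def zero_prod_def)
    hence "fst z = 0" "snd z = 0" using inj by (metis injD)+
    hence "z = 0" by (simp add: prod_eq_iff)
    thus False using assms(2) by (simp add: isocone_def)
  qed
  thus ?thesis using assms Ogrp_ImO[OF assms(1)] Ogrp_D(4)[OF assms(1)]
    by (simp add: isocone_iff gg_def onorm_B)
qed

lemma Ogrp_herm: assumes "g \<in> Ogrp" shows "Re (herm (gg g z) (gg g z)) = Re (herm z z)"
  using Ogrp_D(4)[OF assms] by (simp add: herm_self gg_def onorm_B)

lemma id_Ogrp: "id \<in> Ogrp"
  by (simp add: Ogrp_def linear_id)

lemma Ogrp_comp: assumes "g \<in> Ogrp" "h \<in> Ogrp" shows "g \<circ> h \<in> Ogrp"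
  using Ogrp_D[OF assms(1)] Ogrp_D[OF assms(2)]
  by (simp add: Ogrp_def linear_compose bij_comp)

lemma SOe_Ogrp: "SOe \<subseteq> Ogrp"
  unfolding SOe_def by (rule path_component_subset)

lemma id_SOe: "id \<in> SOe"
  unfolding SOe_def using id_Ogrp by (simp add: path_component_refl)

lemma SOe_family:
  fixes F :: "'a::topological_space \<Rightarrow> soct \<Rightarrow> soct"
  assumes "path_connected T" "continuous_on T F" "F ` T \<subseteq> Ogrp" "a \<in> T" "F a = id" "b \<in> T"
  shows "F b \<in> SOe"
proof -
  have "path_connected (F ` T)" using path_connected_continuous_image assms(1,2) by blast
  hence "path_component (F ` T) id (F b)" using assms(4,5,6)
    by (metis image_eqI path_connected_component)
  hence "path_component Ogrp id (F b)" using path_component_of_subset assms(3) by blast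
  thus ?thesis by (simp add: SOe_def)
qed

lemma linear_continuous_soct: "linear (g :: soct \<Rightarrow> soct) \<Longrightarrow> continuous_on S g"
  by (simp add: linear_continuous_on linear_conv_bounded_linear)

lemma SOe_comp: assumes "g \<in> SOe" "h \<in> SOe" shows "g \<circ> h \<in> SOe"
proof -
  have gO: "g \<in> Ogrp" using assms(1) SOe_Ogrp by blast
  have "path_component Ogrp id h" using assms(2) by (simp add: SOe_def)
  then obtain eta where eta: "path eta" "path_image eta \<subseteq> Ogrp" "pathstart eta = id" "pathfinish eta = h"
    unfolding path_component_def by blast
  define zeta where "zeta = (\<lambda>t. g \<circ> eta t)"
  have "continuous_on {0..1} zeta"
    unfolding zeta_def
  proof (rule continuous_on_coordinatewise_then_product)
    fix x
    have c1: "continuous_on {0..1} (\<lambda>t. eta t x)"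
      using eta(1) unfolding path_def by (rule continuous_on_product_then_coordinatewise)
    have c2: "continuous_on UNIV g" using Ogrp_D(1)[OF gO] by (rule linear_continuous_soct)
    show "continuous_on {0..1} (\<lambda>t. (g \<circ> eta t) x)"
      using continuous_on_compose2[OF c2 c1] by simp
  qed
  moreover have "path_image zeta \<subseteq> Ogrp"
    using eta(2) Ogrp_comp[OF gO] by (auto simp: path_image_def zeta_def)
  ultimately have "path_component Ogrp (zeta 0) (zeta 1)"
    unfolding path_component_def path_def pathstart_def pathfinish_def by blast
  moreover have "zeta 0 = g" "zeta 1 = g \<circ> h" using eta(3,4) by (auto simp: zeta_def pathstart_def pathfinish_def)
  ultimately have "path_component Ogrp g (g \<circ> h)" by simp
  moreover have "path_component Ogrp id g" using assms(1) by (simp add: SOe_def)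
  ultimately show ?thesis unfolding SOe_def using path_component_trans by blast
qed

definition Sgrp where "Sgrp = G0 \<inter> SOe"

lemma G0_comp: assumes "g \<in> G0" "h \<in> G0" shows "g \<circ> h \<in> G0"
  using G0_D[OF assms(1)] G0_D[OF assms(2)] by (simp add: G0_def linear_compose bij_comp del: omult.simps)

lemma Sgrp_comp: "g \<in> Sgrp \<Longrightarrow> h \<in> Sgrp \<Longrightarrow> g \<circ> h \<in> Sgrp"
  by (simp add: Sgrp_def G0_comp SOe_comp)

lemma Sgrp_family:
  fixes F :: "'a::topological_space \<Rightarrow> soct \<Rightarrow> soct"
  assumes "path_connected T" "continuous_on T F" "F ` T \<subseteq> G0" "a \<in> T" "F a = id" "b \<in> T"
  shows "F b \<in> Sgrp"
  using SOe_family[OF assms(1,2) _ assms(4,5,6)] assms(3,6) G0_Ogrp by (auto simp: Sgrp_def)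

lemma G0I:
  assumes "linear f" "\<And>x. g (f x) = x" "\<And>x. f (g x) = x" "\<And>x y. f (omult x y) = omult (f x) (f y)"
  shows "f \<in> G0"
proof -
  have "bij f" by (rule bij_betw_byWitness[where f'=g]) (auto simp: assms)
  thus ?thesis unfolding G0_def using assms(1,4) by blast
qed

definition phi :: "real \<Rightarrow> real \<Rightarrow> soct \<Rightarrow> soct" where
  "phi c s x = (case x of ((a0,a1,a2,a3),(b0,b1,b2,b3)) \<Rightarrow>
     ((a0, c*a1+s*b0, a2, c*a3-s*b2),(s*a1+c*b0, b1, -s*a3+c*b2, b3)))"

lemma phi_lin: "linear (phi c s)"
proof (rule linearI)
  fix x y :: soct and r :: real
  show "phi c s (x + y) = phi c s x + phi c s y"
    by (cases x rule: soct_ex; cases y rule: soct_ex) (simp add: phi_def algebra_simps)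
  show "phi c s (r *\<^sub>R x) = r *\<^sub>R phi c s x"
    by (cases x rule: soct_ex) (simp add: phi_def algebra_simps)
qed

lemma phi_inv: assumes "c * c - s * s = 1" shows "phi c (-s) (phi c s x) = x"
proof (cases x rule: soct_ex)
  case (1 a0 a1 a2 a3 b0 b1 b2 b3)
  have e: "c * c = 1 + s * s" using assms by simp
  have "c * (c * a) - s * (s * a) = a" for a using assms by (metis mult.assoc mult.left_neutral left_diff_distrib)
  thus ?thesis by (simp add: 1 phi_def algebra_simps)
qed

lemma phi_hom: assumes "c * c - s * s = 1" shows "phi c s (omult x y) = omult (phi c s x) (phi c s y)"
proof (cases x rule: soct_ex; cases y rule: soct_ex)
  fix a0 a1 a2 a3 b0 b1 b2 b3 c0 c1 c2 c3 d0 d1 d2 d3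
  assume x: "x = ((a0,a1,a2,a3),(b0,b1,b2,b3))" and y: "y = ((c0,c1,c2,c3),(d0,d1,d2,d3))"
  have e2: "\<And>t. c * (c * t) = t + s * (s * t)" using assms by (metis add.commute diff_add_cancel distrib_right mult.assoc mult_1)
  show ?thesis apply (simp add: x y phi_def)
    apply (intro conjI)
    apply (simp_all add: algebra_simps e2)
    done
qed


definition psi :: "real \<Rightarrow> real \<Rightarrow> soct \<Rightarrow> soct" where
  "psi c s x = (case x of ((a0,a1,a2,a3),(b0,b1,b2,b3)) \<Rightarrow> ((a0, a1, c*a2+s*b0, c*a3+s*b1),(s*a2+c*b0, s*a3+c*b1, b2, b3)))"

lemma psi_lin: "linear (psi c s)"
proof (rule linearI)
  fix x y :: soct and r :: real
  show "psi c s (x + y) = psi c s x + psi c s y"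
    by (cases x rule: soct_ex; cases y rule: soct_ex) (simp add: psi_def algebra_simps)
  show "psi c s (r *\<^sub>R x) = r *\<^sub>R psi c s x"
    by (cases x rule: soct_ex) (simp add: psi_def algebra_simps)
qed

lemma psi_inv: assumes "c * c - s * s = 1" shows "psi c (-s) (psi c s x) = x"
proof (cases x rule: soct_ex)
  case (1 a0 a1 a2 a3 b0 b1 b2 b3)
  have e2: "\<And>t. c * (c * t) = t + s * (s * t)" using assms by (metis add.commute diff_add_cancel distrib_right mult.assoc mult_1)
  have e: "c * c = 1 + s * s" using assms by simp
  show ?thesis by (simp add: 1 psi_def algebra_simps e2) (simp add: e distrib_left)
qed

lemma psi_hom: assumes "c * c - s * s = 1" shows "psi c s (omult x y) = omult (psi c s x) (psi c s y)"
proof (cases x rule: soct_ex; cases y rule: soct_ex)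
  fix a0 a1 a2 a3 b0 b1 b2 b3 c0 c1 c2 c3 d0 d1 d2 d3
  assume x: "x = ((a0,a1,a2,a3),(b0,b1,b2,b3))" and y: "y = ((c0,c1,c2,c3),(d0,d1,d2,d3))"
  have e2: "\<And>t. c * (c * t) = t + s * (s * t)" using assms by (metis add.commute diff_add_cancel distrib_right mult.assoc mult_1)
  show ?thesis apply (simp add: x y psi_def)
    apply (intro conjI)
    apply (simp_all add: algebra_simps e2)
    done
qed

definition diag :: "real \<Rightarrow> real \<Rightarrow> soct \<Rightarrow> soct" where
  "diag c s x = (case x of ((a0,a1,a2,a3),(b0,b1,b2,b3)) \<Rightarrow> ((a0, c*a1-s*b1, c*a2+s*b2, a3),(b0, -s*a1+c*b1, s*a2+c*b2, b3)))"

lemma diag_lin: "linear (diag c s)"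
proof (rule linearI)
  fix x y :: soct and r :: real
  show "diag c s (x + y) = diag c s x + diag c s y"
    by (cases x rule: soct_ex; cases y rule: soct_ex) (simp add: diag_def algebra_simps)
  show "diag c s (r *\<^sub>R x) = r *\<^sub>R diag c s x"
    by (cases x rule: soct_ex) (simp add: diag_def algebra_simps)
qed

lemma diag_inv: assumes "c * c - s * s = 1" shows "diag c (-s) (diag c s x) = x"
proof (cases x rule: soct_ex)
  case (1 a0 a1 a2 a3 b0 b1 b2 b3)
  have e2: "\<And>t. c * (c * t) = t + s * (s * t)" using assms by (metis add.commute diff_add_cancel distrib_right mult.assoc mult_1)
  have e: "c * c = 1 + s * s" using assms by simp
  show ?thesis by (simp add: 1 diag_def algebra_simps e2) (simp add: e distrib_left)
qed

lemma diag_hom: assumes "c * c - s * s = 1" shows "diag c s (omult x y) = omult (diag c s x) (diag c s y)"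
proof (cases x rule: soct_ex; cases y rule: soct_ex)
  fix a0 a1 a2 a3 b0 b1 b2 b3 c0 c1 c2 c3 d0 d1 d2 d3
  assume x: "x = ((a0,a1,a2,a3),(b0,b1,b2,b3))" and y: "y = ((c0,c1,c2,c3),(d0,d1,d2,d3))"
  have e2: "\<And>t. c * (c * t) = t + s * (s * t)" using assms by (metis add.commute diff_add_cancel distrib_right mult.assoc mult_1)
  show ?thesis apply (simp add: x y diag_def)
    apply (intro conjI)
    apply (simp_all add: algebra_simps e2)
    done
qed

definition shear :: "real \<Rightarrow> soct \<Rightarrow> soct" where
  "shear g x = (case x of ((a0,a1,a2,a3),(b0,b1,b2,b3)) \<Rightarrow>
     ((a0, a1 + g*(b2-a2), a2 + g*(a1+b1), a3),(b0, b1 + g*(a2-b2), b2 + g*(a1+b1), b3)))"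

lemma shear_lin: "linear (shear g)"
proof (rule linearI)
  fix x y :: soct and r :: real
  show "shear g (x + y) = shear g x + shear g y"
    by (cases x rule: soct_ex; cases y rule: soct_ex) (simp add: shear_def algebra_simps)
  show "shear g (r *\<^sub>R x) = r *\<^sub>R shear g x"
    by (cases x rule: soct_ex) (simp add: shear_def algebra_simps)
qed

lemma shear_inv: "shear (-g) (shear g x) = x"
  by (cases x rule: soct_ex) (simp add: shear_def algebra_simps)

lemma shear_hom: "shear g (omult x y) = omult (shear g x) (shear g y)"
proof (cases x rule: soct_ex; cases y rule: soct_ex)
  fix a0 a1 a2 a3 b0 b1 b2 b3 c0 c1 c2 c3 d0 d1 d2 d3
  assume x: "x = ((a0,a1,a2,a3),(b0,b1,b2,b3))" and y: "y = ((c0,c1,c2,c3),(d0,d1,d2,d3))"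
  show ?thesis apply (simp add: x y shear_def)
    apply (intro conjI)
    apply (simp_all add: algebra_simps)
    done
qed

lemma quat_ex: obtains a0 a1 a2 a3 where "x = (a0,a1,a2,a3)"
  by (metis prod.exhaust)

definition qone :: quat where "qone = (1,0,0,0)"

lemma qmult_assoc: "qmult (qmult a b) c = qmult a (qmult b c)"
  by (cases a rule: quat_ex; cases b rule: quat_ex; cases c rule: quat_ex) (simp add: algebra_simps)

lemma qconj_qmult: "qconj (qmult a b) = qmult (qconj b) (qconj a)"
  by (cases a rule: quat_ex; cases b rule: quat_ex) (simp add: algebra_simps)

lemma qconj_qconj: "qconj (qconj a) = a"
  by (cases a rule: quat_ex) simp

lemma qmult_add_left: "qmult (a + b) c = qmult a c + qmult b c"
  and qmult_add_right: "qmult c (a + b) = qmult c a + qmult c b"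
  and qmult_scale_left: "qmult (r *\<^sub>R a) c = r *\<^sub>R qmult a c"
  and qmult_scale_right: "qmult c (r *\<^sub>R a) = r *\<^sub>R qmult c a"
  by (cases a rule: quat_ex; cases b rule: quat_ex; cases c rule: quat_ex; simp add: algebra_simps)+

lemma qconj_add: "qconj (a + b) = qconj a + qconj b"
  and qconj_scale: "qconj (r *\<^sub>R a) = r *\<^sub>R qconj a"
  by (cases a rule: quat_ex; cases b rule: quat_ex; simp add: algebra_simps)+

lemma qmult_one_left: "qmult qone a = a" and qmult_one_right: "qmult a qone = a"
  by (cases a rule: quat_ex; simp add: qone_def)+

lemma qconj_one: "qconj qone = qone" by (simp add: qone_def)

lemma quat_inner: "(a0,a1,a2,a3) \<bullet> ((b0,b1,b2,b3)::quat) = a0*b0+a1*b1+a2*b2+a3*b3"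
  by simp

lemma qmult_conj_unit: assumes "p \<bullet> p = 1"
  shows "qmult p (qconj p) = qone" "qmult (qconj p) p = qone"
  using assms by (cases p rule: quat_ex; simp add: qone_def power2_eq_square algebra_simps)+

lemma qunit_cancel: assumes "p \<bullet> p = 1"
  shows "qmult p (qmult (qconj p) x) = x" "qmult (qconj p) (qmult p x) = x"
  using qmult_conj_unit[OF assms] by (metis qmult_assoc qmult_one_left)+

lemma qconj_unit: "p \<bullet> p = 1 \<Longrightarrow> qconj p \<bullet> qconj p = 1"
  by (cases p rule: quat_ex) simp

section \<open>Compact part: kmap\<close>

definition kmap :: "quat \<Rightarrow> quat \<Rightarrow> soct \<Rightarrow> soct" where
  "kmap p q x = (qmult (qmult p (fst x)) (qconj p), qmult (qmult q (snd x)) (qconj p))"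

lemma kmap_pair: "kmap p q (a,b) = (qmult p (qmult a (qconj p)), qmult q (qmult b (qconj p)))"
  by (simp add: kmap_def qmult_assoc)

lemma kmap_lin: "linear (kmap p q)"
  by (rule linearI) (simp_all add: kmap_def qmult_add_left qmult_add_right qmult_scale_left qmult_scale_right)

lemma kmap_inv: assumes "p \<bullet> p = 1" "q \<bullet> q = 1"
  shows "kmap (qconj p) (qconj q) (kmap p q x) = x"
  by (cases x rule: prod.exhaust) (simp add: kmap_pair qconj_qconj qmult_assoc qunit_cancel assms qmult_conj_unit qmult_one_right)

lemma kmap_id: "kmap qone qone = id"
  by (rule ext) (simp add: kmap_def qconj_one qmult_one_left qmult_one_right)

lemma kmap_hom: assumes "p \<bullet> p = 1" "q \<bullet> q = 1"
  shows "kmap p q (omult x y) = omult (kmap p q x) (kmap p q y)"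
proof (cases x rule: prod.exhaust; cases y rule: prod.exhaust)
  fix a b c d assume x: "x = (a,b)" and y: "y = (c,d)"
  show ?thesis unfolding x y
    by (simp add: kmap_pair qmult_assoc qconj_qmult qconj_qconj qunit_cancel assms
        qmult_add_left qmult_add_right del: qmult.simps)
qed

lemma kmap_G0: assumes "p \<bullet> p = 1" "q \<bullet> q = 1" shows "kmap p q \<in> G0"
  by (rule G0I[OF kmap_lin kmap_inv[OF assms]]) (auto intro: kmap_hom[OF assms]
      simp: kmap_inv[OF qconj_unit[OF assms(1)] qconj_unit[OF assms(2)], simplified qconj_qconj])

lemma qmult_proj: "qmult a b =
  (fst a * fst b - fst (snd a) * fst (snd b) - fst (snd (snd a)) * fst (snd (snd b)) - snd (snd (snd a)) * snd (snd (snd b)),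
   fst a * fst (snd b) + fst (snd a) * fst b + fst (snd (snd a)) * snd (snd (snd b)) - snd (snd (snd a)) * fst (snd (snd b)),
   fst a * fst (snd (snd b)) - fst (snd a) * snd (snd (snd b)) + fst (snd (snd a)) * fst b + snd (snd (snd a)) * fst (snd b),
   fst a * snd (snd (snd b)) + fst (snd a) * fst (snd (snd b)) - fst (snd (snd a)) * fst (snd b) + snd (snd (snd a)) * fst b)"
  by (cases a rule: quat_ex; cases b rule: quat_ex) simp

lemma qconj_proj: "qconj a = (fst a, - fst (snd a), - fst (snd (snd a)), - snd (snd (snd a)))"
  by (cases a rule: quat_ex) simp

lemma continuous_on_qmult [continuous_intros]:
  "continuous_on S f \<Longrightarrow> continuous_on S g \<Longrightarrow> continuous_on S (\<lambda>t. qmult (f t) (g t))"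
  unfolding qmult_proj by (intro continuous_intros)

lemma continuous_on_qconj [continuous_intros]:
  "continuous_on S f \<Longrightarrow> continuous_on S (\<lambda>t. qconj (f t))"
  unfolding qconj_proj by (intro continuous_intros)

lemma kmap_Sgrp: assumes "p \<bullet> p = 1" "q \<bullet> q = 1" shows "kmap p q \<in> Sgrp"
proof -
  define T where "T = (sphere (0::quat) 1) \<times> (sphere (0::quat) 1)"
  define F where "F = (\<lambda>w::quat\<times>quat. kmap (fst w) (snd w))"
  have pc: "path_connected T" unfolding T_def
    by (intro path_connected_Times path_connected_sphere) simp_all
  have ct: "continuous_on T F" unfolding F_def
    by (intro continuous_on_coordinatewise_then_product) (simp add: kmap_def, intro continuous_intros)
  have un: "w \<in> T \<Longrightarrow> fst w \<bullet> fst w = 1 \<and> snd w \<bullet> snd w = 1" for w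
    by (auto simp: T_def norm_eq_1)
  have "F ` T \<subseteq> G0" using un kmap_G0 by (auto simp: F_def)
  moreover have "(qone, qone) \<in> T" "(p,q) \<in> T" using assms by (auto simp: T_def norm_eq_1 qone_def)
  moreover have "F (qone,qone) = id" by (simp add: F_def kmap_id)
  ultimately have "F (p,q) \<in> Sgrp" using Sgrp_family[OF pc ct] by blast
  thus ?thesis by (simp add: F_def)
qed

lemma shear_G0: "shear g \<in> G0"
proof (rule G0I[where g="shear (-g)", OF shear_lin])
  show "\<And>x. shear (- g) (shear g x) = x" by (rule shear_inv)
  show "\<And>x. shear g (shear (- g) x) = x" using shear_inv[of "-g"] by simp
  show "\<And>x y. shear g (omult x y) = omult (shear g x) (shear g y)" by (rule shear_hom)
qed

lemma shear_Sgrp: "shear g \<in> Sgrp"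
proof -
  have ct: "continuous_on UNIV shear"
  proof (intro continuous_on_coordinatewise_then_product)
    fix x show "continuous_on UNIV (\<lambda>t. shear t x)"
      by (cases x rule: soct_ex) (simp add: shear_def, intro continuous_intros)
  qed
  have "shear 0 = id" by (rule ext, simp add: shear_def split: prod.splits)
  thus ?thesis using Sgrp_family[OF path_connected_UNIV ct, of 0 g] shear_G0 by auto
qed


lemma phi_G0: assumes "c * c - s * s = 1" shows "phi c s \<in> G0"
proof (rule G0I[where g="phi c (-s)", OF phi_lin])
  show "\<And>x. phi c (- s) (phi c s x) = x" by (rule phi_inv[OF assms])
  show "\<And>x. phi c s (phi c (- s) x) = x" using phi_inv[of c "-s"] assms by simp
  show "\<And>x y. phi c s (omult x y) = omult (phi c s x) (phi c s y)" by (rule phi_hom[OF assms])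
qed

lemma phi_Sgrp: assumes "c * c - s * s = 1" "c > 0" shows "phi c s \<in> Sgrp"
proof -
  define F where "F = (\<lambda>t. phi (sqrt (1 + t * t)) t)"
  have ct: "continuous_on UNIV F"
  proof (intro continuous_on_coordinatewise_then_product)
    fix x show "continuous_on UNIV (\<lambda>t. F t x)"
      by (cases x rule: soct_ex) (simp add: F_def phi_def, intro continuous_intros)
  qed
  have sq: "sqrt (1 + t * t) * sqrt (1 + t * t) - t * t = 1" for t
    by (simp add: add_nonneg_nonneg)
  have "F ` UNIV \<subseteq> G0" using phi_G0[OF sq] by (auto simp: F_def)
  moreover have "F 0 = id" by (rule ext, simp add: F_def phi_def split: prod.splits)
  ultimately have "F s \<in> Sgrp" using Sgrp_family[OF path_connected_UNIV ct, of 0 s] by auto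
  moreover have "c = sqrt (1 + s * s)"
  proof -
    have "1 + s * s = c * c" using assms(1) by simp
    thus ?thesis using assms(2) by simp
  qed
  ultimately show ?thesis by (simp add: F_def)
qed

lemma psi_G0: assumes "c * c - s * s = 1" shows "psi c s \<in> G0"
proof (rule G0I[where g="psi c (-s)", OF psi_lin])
  show "\<And>x. psi c (- s) (psi c s x) = x" by (rule psi_inv[OF assms])
  show "\<And>x. psi c s (psi c (- s) x) = x" using psi_inv[of c "-s"] assms by simp
  show "\<And>x y. psi c s (omult x y) = omult (psi c s x) (psi c s y)" by (rule psi_hom[OF assms])
qed

lemma psi_Sgrp: assumes "c * c - s * s = 1" "c > 0" shows "psi c s \<in> Sgrp"
proof -
  define F where "F = (\<lambda>t. psi (sqrt (1 + t * t)) t)"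
  have ct: "continuous_on UNIV F"
  proof (intro continuous_on_coordinatewise_then_product)
    fix x show "continuous_on UNIV (\<lambda>t. F t x)"
      by (cases x rule: soct_ex) (simp add: F_def psi_def, intro continuous_intros)
  qed
  have sq: "sqrt (1 + t * t) * sqrt (1 + t * t) - t * t = 1" for t
    by (simp add: add_nonneg_nonneg)
  have "F ` UNIV \<subseteq> G0" using psi_G0[OF sq] by (auto simp: F_def)
  moreover have "F 0 = id" by (rule ext, simp add: F_def psi_def split: prod.splits)
  ultimately have "F s \<in> Sgrp" using Sgrp_family[OF path_connected_UNIV ct, of 0 s] by auto
  moreover have "c = sqrt (1 + s * s)"
  proof -
    have "1 + s * s = c * c" using assms(1) by simp
    thus ?thesis using assms(2) by simp
  qed
  ultimately show ?thesis by (simp add: F_def)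
qed

lemma diag_G0: assumes "c * c - s * s = 1" shows "diag c s \<in> G0"
proof (rule G0I[where g="diag c (-s)", OF diag_lin])
  show "\<And>x. diag c (- s) (diag c s x) = x" by (rule diag_inv[OF assms])
  show "\<And>x. diag c s (diag c (- s) x) = x" using diag_inv[of c "-s"] assms by simp
  show "\<And>x y. diag c s (omult x y) = omult (diag c s x) (diag c s y)" by (rule diag_hom[OF assms])
qed

lemma diag_Sgrp: assumes "c * c - s * s = 1" "c > 0" shows "diag c s \<in> Sgrp"
proof -
  define F where "F = (\<lambda>t. diag (sqrt (1 + t * t)) t)"
  have ct: "continuous_on UNIV F"
  proof (intro continuous_on_coordinatewise_then_product)
    fix x show "continuous_on UNIV (\<lambda>t. F t x)"
      by (cases x rule: soct_ex) (simp add: F_def diag_def, intro continuous_intros)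
  qed
  have sq: "sqrt (1 + t * t) * sqrt (1 + t * t) - t * t = 1" for t
    by (simp add: add_nonneg_nonneg)
  have "F ` UNIV \<subseteq> G0" using diag_G0[OF sq] by (auto simp: F_def)
  moreover have "F 0 = id" by (rule ext, simp add: F_def diag_def split: prod.splits)
  ultimately have "F s \<in> Sgrp" using Sgrp_family[OF path_connected_UNIV ct, of 0 s] by auto
  moreover have "c = sqrt (1 + s * s)"
  proof -
    have "1 + s * s = c * c" using assms(1) by simp
    thus ?thesis using assms(2) by simp
  qed
  ultimately show ?thesis by (simp add: F_def)
qed

lemma qmult_conj_self: "qmult (qconj b) b = (b \<bullet> b) *\<^sub>R qone"
  by (cases b rule: quat_ex) (simp add: qone_def power2_eq_square algebra_simps)

lemma qnorm_mult: "qmult a b \<bullet> qmult a b = (a \<bullet> a) * (b \<bullet> b)"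
  by (cases a rule: quat_ex; cases b rule: quat_ex) (simp add: power2_eq_square algebra_simps)

lemma qnorm_conj: "qconj b \<bullet> qconj b = b \<bullet> b"
  by (cases b rule: quat_ex) simp

lemma rot_re: "fst (qmult (qmult p a) (qconj p)) = (p \<bullet> p) * fst a"
  by (cases a rule: quat_ex; cases p rule: quat_ex) (simp add: power2_eq_square algebra_simps)

lemma rot_scale: "qmult (qmult (r *\<^sub>R p) a) (qconj (r *\<^sub>R p)) = (r * r) *\<^sub>R qmult (qmult p a) (qconj p)"
  by (simp add: qmult_scale_left qmult_scale_right qconj_scale)

lemma rot_w_i: assumes rr: "r*r = a1*a1+a2*a2+a3*a3"
  shows "qmult (qmult (r + a1, 0, a3, -a2) (0,a1,a2,a3)) (qconj (r + a1, 0, a3, -a2)) = (2*r*(r+a1)) *\<^sub>R (0,r,0,0)"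
proof -
  have rt: "r * (r * t) = a1 * (a1 * t) + a2 * (a2 * t) + a3 * (a3 * t)" for t
      using rr by (metis distrib_right mult.assoc)
  have rt2: "t * (r * r) = a1 * (a1 * t) + a2 * (a2 * t) + a3 * (a3 * t)" for t
      using rt by (metis mult.assoc mult.commute)
  show ?thesis by (simp add: algebra_simps rt rt2)
qed

lemma rot_to_i: assumes "fst a = 0"
  shows "\<exists>p r. p \<bullet> p = 1 \<and> r \<ge> 0 \<and> qmult (qmult p a) (qconj p) = (0,r,0,0)"
proof -
  obtain a1 a2 a3 where a: "a = (0,a1,a2,a3)" using assms by (cases a rule: quat_ex) auto
  define r where "r = sqrt (a1*a1 + a2*a2 + a3*a3)"
  have r0: "r \<ge> 0" by (simp add: r_def)
  have rr: "r * r = a1*a1 + a2*a2 + a3*a3" unfolding r_def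
    by (simp add: add_nonneg_nonneg)
  have ra: "r \<ge> - a1"
  proof -
    have "sqrt (a1*a1) \<le> r" unfolding r_def by (rule real_sqrt_le_mono) simp
    thus ?thesis by simp
  qed
  show ?thesis
  proof (cases "r + a1 = 0")
    case True
    hence "r = -a1" by simp
    hence "a1*a1 = a1*a1 + a2*a2 + a3*a3" using rr by simp
    hence "a2*a2 + a3*a3 = 0" by simp
    hence "a2 = 0" "a3 = 0" by (auto simp: add_nonneg_eq_0_iff)
    thus ?thesis using True r0 by (intro exI[of _ "(0,0,1,0)"] exI[of _ r]) (simp add: a)
  next
    case False
    hence pos: "r + a1 > 0" using ra by simp
    define w :: quat where "w = (r + a1, 0, a3, -a2)"
    define n where "n = w \<bullet> w"
    have n: "n = 2 * r * (r + a1)" using rr by (simp add: n_def w_def power2_eq_square algebra_simps)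
    have rpos: "r > 0"
    proof (rule ccontr)
      assume "\<not> r > 0"
      hence "r = 0" using r0 by simp
      moreover have "a1*a1 \<ge> 0" "a2*a2 \<ge> 0" "a3*a3 \<ge> 0" by simp_all
      moreover have "a1*a1 + a2*a2 + a3*a3 = 0" using rr \<open>r = 0\<close> by simp
      ultimately have "a1*a1 = 0" by linarith
      hence "a1 = 0" by simp
      thus False using pos \<open>r = 0\<close> by simp
    qed
    have npos: "n > 0" using n pos rpos by (simp add: zero_less_mult_iff)
    have rt: "r * (r * t) = a1 * (a1 * t) + a2 * (a2 * t) + a3 * (a3 * t)" for t
      using rr by (metis distrib_right mult.assoc)
    have wr: "qmult (qmult w a) (qconj w) = n *\<^sub>R (0,r,0,0)"
      unfolding n w_def a by (rule rot_w_i[OF rr])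
    define p where "p = (1 / sqrt n) *\<^sub>R w"
    have "p \<bullet> p = 1" using npos by (simp add: p_def n_def[symmetric] inner_scaleR_left inner_scaleR_right)
    moreover have "qmult (qmult p a) (qconj p) = (0,r,0,0)"
    proof -
      have "qmult (qmult p a) (qconj p) = (1 / sqrt n * (1 / sqrt n)) *\<^sub>R (n *\<^sub>R (0,r,0,0))"
        unfolding p_def rot_scale wr by simp
      also have "\<dots> = (0,r,0,0)" using npos by (simp del: scaleR_Pair)
      finally show ?thesis .
    qed
    ultimately show ?thesis using r0 by blast
  qed
qed


lemma rot_w_j: assumes rr: "r*r = a2*a2+a3*a3"
  shows "qmult (qmult (r + a2, -a3, 0, 0) (0,0,a2,a3)) (qconj (r + a2, -a3, 0, 0)) = (2*r*(r+a2)) *\<^sub>R (0,0,r,0)"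
proof -
  have rt: "r * (r * t) = a2 * (a2 * t) + a3 * (a3 * t)" for t
      using rr by (metis distrib_right mult.assoc)
  have rt2: "t * (r * r) = a2 * (a2 * t) + a3 * (a3 * t)" for t
      using rt by (metis mult.assoc mult.commute)
  show ?thesis by (simp add: algebra_simps rt rt2)
qed

lemma rot_about_i: assumes "fst a = 0" "fst (snd a) = 0"
  shows "\<exists>p r. p \<bullet> p = 1 \<and> fst (snd (snd p)) = 0 \<and> snd (snd (snd p)) = 0 \<and> r \<ge> 0 \<and>
     qmult (qmult p a) (qconj p) = (0,0,r,0)"
proof -
  obtain a2 a3 where a: "a = (0,0,a2,a3)" using assms by (cases a rule: quat_ex) auto
  define r where "r = sqrt (a2*a2 + a3*a3)"
  have r0: "r \<ge> 0" by (simp add: r_def)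
  have rr: "r * r = a2*a2 + a3*a3" unfolding r_def
    by (simp add: add_nonneg_nonneg)
  have ra: "r \<ge> - a2"
  proof -
    have "sqrt (a2*a2) \<le> r" unfolding r_def by (rule real_sqrt_le_mono) simp
    thus ?thesis by simp
  qed
  show ?thesis
  proof (cases "r + a2 = 0")
    case True
    hence "r = -a2" by simp
    hence "a2*a2 = a2*a2 + a3*a3" using rr by simp
    hence "a3 = 0" by simp
    thus ?thesis using True r0 by (intro exI[of _ "(0,1,0,0)"] exI[of _ r]) (simp add: a)
  next
    case False
    hence pos: "r + a2 > 0" using ra by simp
    define w :: quat where "w = (r + a2, -a3, 0, 0)"
    define n where "n = w \<bullet> w"
    have n: "n = 2 * r * (r + a2)" using rr by (simp add: n_def w_def power2_eq_square algebra_simps)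
    have rpos: "r > 0"
    proof (rule ccontr)
      assume "\<not> r > 0"
      hence "r = 0" using r0 by simp
      moreover have "a2*a2 \<ge> 0" "a3*a3 \<ge> 0" by simp_all
      moreover have "a2*a2 + a3*a3 = 0" using rr \<open>r = 0\<close> by simp
      ultimately have "a2*a2 = 0" by linarith
      hence "a2 = 0" by simp
      thus False using pos \<open>r = 0\<close> by simp
    qed
    have npos: "n > 0" using n pos rpos by (simp add: zero_less_mult_iff)
    have wr: "qmult (qmult w a) (qconj w) = n *\<^sub>R (0,0,r,0)"
      unfolding n w_def a by (rule rot_w_j[OF rr])
    define p where "p = (1 / sqrt n) *\<^sub>R w"
    have "p \<bullet> p = 1" using npos by (simp add: p_def n_def[symmetric] inner_scaleR_left inner_scaleR_right)
    moreover have "qmult (qmult p a) (qconj p) = (0,0,r,0)"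
    proof -
      have "qmult (qmult p a) (qconj p) = (1 / sqrt n * (1 / sqrt n)) *\<^sub>R (n *\<^sub>R (0,0,r,0))"
        unfolding p_def rot_scale wr by simp
      also have "\<dots> = (0,0,r,0)" using npos by (simp del: scaleR_Pair)
      finally show ?thesis .
    qed
    moreover have "fst (snd (snd p)) = 0" "snd (snd (snd p)) = 0" by (simp_all add: p_def w_def)
    ultimately show ?thesis using r0 by blast
  qed
qed

lemma rot_fix_i: assumes "p \<bullet> p = 1" "fst (snd (snd p)) = 0" "snd (snd (snd p)) = 0"
  shows "qmult (qmult p (0,1,0,0)) (qconj p) = (0,1,0,0)"
proof -
  obtain p0 p1 where p: "p = (p0,p1,0,0)" using assms(2,3) by (cases p rule: quat_ex) auto
  have "p0 * p0 + p1 * p1 = 1" using assms(1) by (simp add: p power2_eq_square)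
  thus ?thesis by (simp add: p algebra_simps)
qed

lemma q_to_real: assumes "p \<bullet> p = 1"
  shows "\<exists>q t. q \<bullet> q = 1 \<and> t \<ge> 0 \<and> qmult (qmult q b) (qconj p) = (t,0,0,0)"
proof (cases "b = 0")
  case True
  thus ?thesis by (intro exI[of _ qone] exI[of _ 0]) (cases p rule: quat_ex, simp add: qone_def zero_prod_def)
next
  case False
  define n where "n = b \<bullet> b"
  have npos: "n > 0" using False by (simp add: n_def)
  define q where "q = (1 / sqrt n) *\<^sub>R qmult p (qconj b)"
  have "q \<bullet> q = 1" using npos assms
    by (simp add: q_def inner_scaleR_left inner_scaleR_right qnorm_mult qnorm_conj n_def[symmetric])
  moreover have "qmult (qmult q b) (qconj p) = (sqrt n, 0, 0, 0)"
  proof -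
    have "qmult (qmult q b) (qconj p) = (1 / sqrt n) *\<^sub>R qmult p (qmult (qmult (qconj b) b) (qconj p))"
      by (simp add: q_def qmult_scale_left qmult_assoc)
    also have "\<dots> = (1 / sqrt n * n) *\<^sub>R qone"
      by (simp add: qmult_conj_self n_def[symmetric] qmult_scale_left qmult_scale_right qmult_one_left
         qmult_conj_unit[OF assms])
    also have "\<dots> = (sqrt n, 0, 0, 0)" using npos
      by (simp add: qone_def) (metis real_div_sqrt less_eq_real_def)
    finally show ?thesis .
  qed
  ultimately show ?thesis using npos by (intro exI[of _ q] exI[of _ "sqrt n"]) simp
qed

definition SI :: "(soct \<Rightarrow> soct) \<Rightarrow> bool" where
  "SI h \<longleftrightarrow> h \<in> Sgrp \<and> (\<exists>h' \<in> Sgrp. \<forall>x. h' (h x) = x)"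

lemma SI_comp: assumes "SI g" "SI h" shows "SI (g \<circ> h)"
proof -
  obtain g' where g': "g' \<in> Sgrp" "\<forall>x. g' (g x) = x" using assms(1) by (auto simp: SI_def)
  obtain h' where h': "h' \<in> Sgrp" "\<forall>x. h' (h x) = x" using assms(2) by (auto simp: SI_def)
  have "h' \<circ> g' \<in> Sgrp" by (rule Sgrp_comp[OF h'(1) g'(1)])
  moreover have "\<forall>x. (h' \<circ> g') ((g \<circ> h) x) = x" using g'(2) h'(2) by (simp del: split_paired_All)
  moreover have "g \<circ> h \<in> Sgrp" using assms by (auto simp: SI_def intro: Sgrp_comp)
  ultimately show ?thesis unfolding SI_def by blast
qed

lemma kmap_SI: assumes "p \<bullet> p = 1" "q \<bullet> q = 1" shows "SI (kmap p q)"
  unfolding SI_def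
proof (intro conjI bexI[of _ "kmap (qconj p) (qconj q)"] allI)
  show "kmap p q \<in> Sgrp" by (rule kmap_Sgrp[OF assms])
  show "kmap (qconj p) (qconj q) \<in> Sgrp" by (rule kmap_Sgrp[OF qconj_unit[OF assms(1)] qconj_unit[OF assms(2)]])
  fix x show "kmap (qconj p) (qconj q) (kmap p q x) = x" by (rule kmap_inv[OF assms])
qed

lemma shear_SI: "SI (shear g)"
  unfolding SI_def
proof (intro conjI bexI[of _ "shear (-g)"] allI)
  show "shear g \<in> Sgrp" "shear (-g) \<in> Sgrp" by (rule shear_Sgrp)+
  fix x show "shear (-g) (shear g x) = x" by (rule shear_inv)
qed

lemma phi_SI: assumes "c * c - s * s = 1" "c > 0" shows "SI (phi c s)"
  unfolding SI_def
proof (intro conjI bexI[of _ "phi c (-s)"] allI)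
  show "phi c s \<in> Sgrp" by (rule phi_Sgrp[OF assms])
  show "phi c (-s) \<in> Sgrp" using phi_Sgrp[of c "-s"] assms by simp
  fix x show "phi c (-s) (phi c s x) = x" by (rule phi_inv[OF assms(1)])
qed

lemma psi_SI: assumes "c * c - s * s = 1" "c > 0" shows "SI (psi c s)"
  unfolding SI_def
proof (intro conjI bexI[of _ "psi c (-s)"] allI)
  show "psi c s \<in> Sgrp" by (rule psi_Sgrp[OF assms])
  show "psi c (-s) \<in> Sgrp" using psi_Sgrp[of c "-s"] assms by simp
  fix x show "psi c (-s) (psi c s x) = x" by (rule psi_inv[OF assms(1)])
qed

lemma diag_SI: assumes "c * c - s * s = 1" "c > 0" shows "SI (diag c s)"
  unfolding SI_def
proof (intro conjI bexI[of _ "diag c (-s)"] allI)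
  show "diag c s \<in> Sgrp" by (rule diag_Sgrp[OF assms])
  show "diag c (-s) \<in> Sgrp" using diag_Sgrp[of c "-s"] assms by simp
  fix x show "diag c (-s) (diag c s x) = x" by (rule diag_inv[OF assms(1)])
qed

lemma SI_G0: "SI h \<Longrightarrow> h \<in> G0" by (simp add: SI_def Sgrp_def)

lemma qmult_zero_rot: "qmult (qmult q 0) (qconj p) = 0"
  by (cases q rule: quat_ex; cases p rule: quat_ex) (simp add: zero_prod_def)

lemma onorm_coord: "onorm ((a0,a1,a2,a3),(b0,b1,b2,b3)) = a0*a0+a1*a1+a2*a2+a3*a3 - b0*b0 - b1*b1 - b2*b2 - b3*b3"
  by (simp add: onorm_B B_coord)

lemma ImO_fst: "x \<in> ImO \<longleftrightarrow> fst (fst x) = 0"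
  by (cases x rule: soct_ex) (simp add: ImO_coord)

definition e1 :: soct where "e1 = ((0,1,0,0),(0,0,0,0))"
definition e2 :: soct where "e2 = ((0,0,1,0),(0,0,0,0))"
definition e4 :: soct where "e4 = ((0,0,0,0),(1,0,0,0))"
definition e5 :: soct where "e5 = ((0,0,0,0),(0,1,0,0))"

lemma step1:
  assumes "u \<in> ImO"
  shows "\<exists>p q r t. p \<bullet> p = 1 \<and> q \<bullet> q = 1 \<and> r \<ge> 0 \<and> t \<ge> 0 \<and> kmap p q u = ((0,r,0,0),(t,0,0,0))"
proof -
  obtain a b where u: "u = (a,b)" by (cases u rule: prod.exhaust)
  have "fst a = 0" using assms unfolding u by (simp add: ImO_fst)
  then obtain p r where p: "p \<bullet> p = 1" "r \<ge> 0" "qmult (qmult p a) (qconj p) = (0,r,0,0)"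
    using rot_to_i by blast
  obtain q t where q: "q \<bullet> q = 1" "t \<ge> 0" "qmult (qmult q b) (qconj p) = (t,0,0,0)"
    using q_to_real[OF p(1)] by blast
  show ?thesis using p q by (intro exI[of _ p] exI[of _ q] exI[of _ r] exI[of _ t]) (simp add: u kmap_def)
qed

lemma redP:
  assumes "u \<in> ImO" "v \<in> ImO" "onorm u = 1" "onorm v = 1" "B u v = 0"
  shows "\<exists>h. SI h \<and> h u = e1 \<and> h v = e2"
proof -
  obtain p1 q1 r1 t1 where k1: "p1 \<bullet> p1 = 1" "q1 \<bullet> q1 = 1" "r1 \<ge> 0" "t1 \<ge> 0"
     "kmap p1 q1 u = ((0,r1,0,0),(t1,0,0,0))" using step1[OF assms(1)] by blast
  have "onorm (kmap p1 q1 u) = 1" using G0_onorm[OF kmap_G0[OF k1(1,2)]] assms(3) by simp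
  hence n1: "r1 * r1 - t1 * t1 = 1" using k1(5) by (simp add: onorm_coord)
  have c1: "r1 > 0" using n1 k1(3)
    by (metis diff_gt_0_iff_gt diff_le_0_iff_le le_less mult_eq_0_iff not_le zero_less_one mult_nonneg_nonneg k1(4))
  define h2 where "h2 = phi r1 (-t1) \<circ> kmap p1 q1"
  have h2SI: "SI h2" unfolding h2_def by (intro SI_comp phi_SI kmap_SI k1(1,2) c1) (simp add: n1)
  have h2u: "h2 u = e1" using n1 by (simp add: h2_def k1(5) phi_def e1_def algebra_simps)
  define v2 where "v2 = h2 v"
  have h2G: "h2 \<in> G0" using SI_G0[OF h2SI] .
  have v2I: "v2 \<in> ImO" "onorm v2 = 1" using G0_ImO[OF h2G assms(2)] assms(4) by (simp_all add: v2_def)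
  have "B v2 e1 = 0" using G0_B[OF h2G, of v u] assms(5) h2u B_sym[of v u] by (simp add: v2_def)
  then obtain g2 g3 d where v2: "v2 = ((0,0,g2,g3),d)" using v2I(1)
    by (cases v2 rule: soct_ex) (auto simp: ImO_coord B_coord e1_def)
  obtain p3 r3 where p3: "p3 \<bullet> p3 = 1" "fst (snd (snd p3)) = 0" "snd (snd (snd p3)) = 0" "r3 \<ge> 0"
     "qmult (qmult p3 (0,0,g2,g3)) (qconj p3) = (0,0,r3,0)" using rot_about_i[of "(0,0,g2,g3)"] by auto
  obtain q3 t3 where q3: "q3 \<bullet> q3 = 1" "t3 \<ge> 0" "qmult (qmult q3 d) (qconj p3) = (t3,0,0,0)"
    using q_to_real[OF p3(1)] by blast
  have k3v: "kmap p3 q3 v2 = ((0,0,r3,0),(t3,0,0,0))" using p3 q3 by (simp add: v2 kmap_def)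
  have k3e: "kmap p3 q3 e1 = e1" using rot_fix_i[OF p3(1,2,3)]
    by (simp add: e1_def kmap_def qmult_zero_rot[unfolded zero_prod_def])
  have "onorm (kmap p3 q3 v2) = 1" using G0_onorm[OF kmap_G0[OF p3(1) q3(1)]] v2I(2) by simp
  hence n3: "r3 * r3 - t3 * t3 = 1" using k3v by (simp add: onorm_coord)
  have c3: "r3 > 0" using n3 p3(4)
    by (metis diff_gt_0_iff_gt diff_le_0_iff_le le_less mult_eq_0_iff not_le zero_less_one mult_nonneg_nonneg q3(2))
  define h where "h = psi r3 (-t3) \<circ> kmap p3 q3 \<circ> h2"
  have "SI h" unfolding h_def by (intro SI_comp psi_SI kmap_SI h2SI p3(1) q3(1) c3) (simp add: n3)
  moreover have "h u = e1" using h2u k3e by (simp add: h_def psi_def e1_def)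
  moreover have "h v = e2" using k3v n3 by (simp add: h_def v2_def[symmetric] psi_def e2_def algebra_simps)
  ultimately show ?thesis by blast
qed


lemma rot_add: "qmult (qmult p (a + b)) (qconj p) = qmult (qmult p a) (qconj p) + qmult (qmult p b) (qconj p)"
  by (simp add: qmult_add_left qmult_add_right)

lemma rot_diff: "qmult (qmult p (a - b)) (qconj p) = qmult (qmult p a) (qconj p) - qmult (qmult p b) (qconj p)"
  by (cases a rule: quat_ex; cases b rule: quat_ex; cases p rule: quat_ex) (simp add: algebra_simps)

lemma rot_scaleR: "qmult (qmult p (r *\<^sub>R a)) (qconj p) = r *\<^sub>R qmult (qmult p a) (qconj p)"
  by (simp add: qmult_scale_left qmult_scale_right)

lemma kmap_pp_e4: assumes "p \<bullet> p = 1" shows "kmap p p e4 = e4"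
proof -
  have "qmult (qmult p (1,0,0,0)) (qconj p) = (1,0,0,0)"
    using qmult_conj_unit(1)[OF assms] qmult_one_right[of p] by (simp add: qone_def)
  thus ?thesis by (simp add: kmap_def e4_def qmult_zero_rot[unfolded zero_prod_def])
qed

lemma redM:
  assumes "u \<in> ImO" "v \<in> ImO" "onorm u = -1" "onorm v = -1" "B u v = 0"
  shows "\<exists>h. SI h \<and> h u = e4 \<and> h v = e5"
proof -
  obtain p1 q1 r1 t1 where k1: "p1 \<bullet> p1 = 1" "q1 \<bullet> q1 = 1" "r1 \<ge> 0" "t1 \<ge> 0"
     "kmap p1 q1 u = ((0,r1,0,0),(t1,0,0,0))" using step1[OF assms(1)] by blast
  have "onorm (kmap p1 q1 u) = -1" using G0_onorm[OF kmap_G0[OF k1(1,2)]] assms(3) by simp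
  hence n1: "t1 * t1 - r1 * r1 = 1" using k1(5) by (simp add: onorm_coord)
  have c1: "t1 > 0" using n1 k1(4)
    by (metis diff_gt_0_iff_gt diff_le_0_iff_le le_less mult_eq_0_iff not_le zero_less_one mult_nonneg_nonneg k1(3))
  define h2 where "h2 = phi t1 (-r1) \<circ> kmap p1 q1"
  have h2SI: "SI h2" unfolding h2_def by (intro SI_comp phi_SI kmap_SI k1(1,2) c1) (simp add: n1)
  have h2u: "h2 u = e4" using n1 by (simp add: h2_def k1(5) phi_def e4_def algebra_simps)
  define v2 where "v2 = h2 v"
  have h2G: "h2 \<in> G0" using SI_G0[OF h2SI] .
  have v2I: "v2 \<in> ImO" "onorm v2 = -1" using G0_ImO[OF h2G assms(2)] assms(4) by (simp_all add: v2_def)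
  have "B v2 e4 = 0" using G0_B[OF h2G, of v u] assms(5) h2u B_sym[of v u] by (simp add: v2_def)
  then obtain g1 g2 g3 d1 d2 d3 where v2: "v2 = ((0,g1,g2,g3),(0,d1,d2,d3))" using v2I(1)
    by (cases v2 rule: soct_ex) (auto simp: ImO_coord B_coord e4_def)
  define ga :: quat where "ga = (0,g1,g2,g3)"
  define de :: quat where "de = (0,d1,d2,d3)"
  obtain p3 m where p3: "p3 \<bullet> p3 = 1" "m \<ge> 0" "qmult (qmult p3 (de - ga)) (qconj p3) = (0,m,0,0)"
    using rot_to_i[of "de - ga"] by (auto simp: de_def ga_def)
  define ga' where "ga' = qmult (qmult p3 ga) (qconj p3)"
  define de' where "de' = qmult (qmult p3 de) (qconj p3)"
  have "fst ga' = 0" "fst de' = 0" by (simp_all add: ga'_def de'_def rot_re ga_def de_def)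
  then obtain x1 x2 x3 y1 y2 y3 where gd': "ga' = (0,x1,x2,x3)" "de' = (0,y1,y2,y3)"
    by (metis prod.collapse)
  have "de' - ga' = (0,m,0,0)" using p3(3) by (simp add: rot_diff de'_def ga'_def)
  hence xy: "y1 - x1 = m" "y2 = x2" "y3 = x3" using gd' by simp_all
  have k3v: "kmap p3 p3 v2 = (ga', de')" by (simp add: kmap_def v2 ga'_def de'_def ga_def de_def)
  obtain p4 r4 where p4: "p4 \<bullet> p4 = 1" "fst (snd (snd p4)) = 0" "snd (snd (snd p4)) = 0" "r4 \<ge> 0"
     "qmult (qmult p4 (0,0,x2,x3)) (qconj p4) = (0,0,r4,0)" using rot_about_i[of "(0,0,x2,x3)"] by auto
  have fix1: "qmult (qmult p4 (0,1,0,0)) (qconj p4) = (0,1,0,0)" by (rule rot_fix_i[OF p4(1,2,3)])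
  have sp: "(0,z,w1,w2) = z *\<^sub>R (0::real,1::real,0::real,0::real) + (0,0,w1,w2)" for z w1 w2 :: real by simp
  have r4g: "qmult (qmult p4 ga') (qconj p4) = (0,x1,r4,0)"
    unfolding gd' sp[of x1] rot_add rot_scaleR fix1 p4(5) by simp
  have r4d: "qmult (qmult p4 de') (qconj p4) = (0,y1,r4,0)"
    unfolding gd' xy(2,3) sp[of y1] rot_add rot_scaleR fix1 p4(5) by simp
  have k4v: "kmap p4 p4 (ga', de') = ((0,x1,r4,0),(0,y1,r4,0))" by (simp add: kmap_def r4g r4d)
  define h4 where "h4 = kmap p4 p4 \<circ> kmap p3 p3 \<circ> h2"
  have h4SI: "SI h4" unfolding h4_def by (intro SI_comp kmap_SI h2SI p3(1) p4(1))
  have h4u: "h4 u = e4" using h2u kmap_pp_e4[OF p3(1)] kmap_pp_e4[OF p4(1)] by (simp add: h4_def)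
  have h4v: "h4 v = ((0,x1,r4,0),(0,y1,r4,0))" using k3v k4v by (simp add: h4_def v2_def[symmetric])
  have "onorm (h4 v) = -1" using G0_onorm[OF SI_G0[OF h4SI]] assms(4) by simp
  hence n4: "x1 * x1 - y1 * y1 = -1" using h4v by (simp add: onorm_coord)
  have "(y1 - x1) * (x1 + y1) = 1" using n4 by (simp add: algebra_simps)
  hence "m * (x1 + y1) = 1" using xy(1) by simp
  hence sxy: "x1 + y1 > 0" using p3(2) by (metis le_less mult_eq_0_iff zero_less_mult_pos zero_less_one zero_neq_one)
  hence y1p: "y1 > 0" using xy(1) p3(2) by linarith
  define sg where "sg = - r4 / (x1 + y1)"
  have sgr: "r4 + sg * (x1 + y1) = 0" using sxy by (simp add: sg_def)
  have shv: "shear sg (h4 v) = ((0,x1,0,0),(0,y1,0,0))" using sgr by (simp add: h4v shear_def)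
  define h where "h = diag y1 x1 \<circ> shear sg \<circ> h4"
  have "SI h" unfolding h_def by (intro SI_comp diag_SI shear_SI h4SI y1p) (use n4 in simp)
  moreover have "h u = e4" using h4u by (simp add: h_def e4_def shear_def diag_def)
  moreover have "h v = e5" using shv n4 by (simp add: h_def diag_def e5_def algebra_simps)
  ultimately show ?thesis by blast
qed

section \<open>Transitivity\<close>

definition zP :: "soct \<times> soct" where "zP = (e1, e2)"
definition zM :: "soct \<times> soct" where "zM = (e4, e5)"

lemma zP_iso: "zP \<in> isocone" "Re (herm zP zP) > 0"
  by (simp_all add: zP_def isocone_iff e1_def e2_def ImO_coord onorm_coord B_coord herm_self prod_eq_iff)

lemma zM_iso: "zM \<in> isocone" "Re (herm zM zM) < 0"
  by (simp_all add: zM_def isocone_iff e4_def e5_def ImO_coord onorm_coord B_coord herm_self prod_eq_iff)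

lemma cscale_real: "cscale (complex_of_real l) (u,v) = (l *\<^sub>R u, l *\<^sub>R v)"
  by (simp add: cscale_def)

lemma actL_comp: "actL (g \<circ> h) L = actL g (actL h L)"
  by (auto simp: actL_def image_image)

lemma SI_D: assumes "SI h" obtains h' where "h \<in> Sgrp" "h' \<in> Sgrp" "\<And>x. h' (h x) = x"
  using assms unfolding SI_def by blast

lemma Sgrp_linear: "h \<in> Sgrp \<Longrightarrow> linear h" by (simp add: Sgrp_def G0_D)

lemma normalize:
  assumes "z \<in> isocone" "Re (herm z z) \<noteq> 0"
  shows "\<exists>u v. cline z = cline (u,v) \<and> u \<in> ImO \<and> v \<in> ImO \<and> B u v = 0 \<and>
     onorm u = onorm v \<and> (onorm u = 1 \<or> onorm u = -1) \<and> sgn (onorm u) = sgn (Re (herm z z))"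
proof -
  obtain a b where z: "z = (a,b)" by (cases z rule: prod.exhaust)
  have ab: "a \<in> ImO" "b \<in> ImO" "onorm a = onorm b" "B a b = 0" using assms(1) by (auto simp: isocone_iff z)
  have h: "Re (herm z z) = 2 * onorm a" using ab by (simp add: herm_self z)
  define rho where "rho = \<bar>onorm a\<bar>"
  have rp: "rho > 0" using assms(2) h by (simp add: rho_def)
  define l where "l = 1 / sqrt rho"
  have l0: "l \<noteq> 0" using rp by (simp add: l_def)
  have ll: "l * l * rho = 1" using rp by (simp add: l_def)
  have cl: "cline z = cline (l *\<^sub>R a, l *\<^sub>R b)"
    using cline_cscale[of "complex_of_real l" z] l0 by (simp add: z cscale_real)
  have na: "onorm (l *\<^sub>R a) = l * l * onorm a" by (simp add: onorm_B B_simps)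
  have "onorm (l *\<^sub>R a) = 1 \<or> onorm (l *\<^sub>R a) = -1" using ll unfolding na rho_def
    by (cases "onorm a \<ge> 0") auto
  moreover have "sgn (onorm (l *\<^sub>R a)) = sgn (Re (herm z z))" unfolding na h
    using l0 by (simp add: sgn_mult)
  ultimately show ?thesis using ab cl
    by (intro exI[of _ "l *\<^sub>R a"] exI[of _ "l *\<^sub>R b"]) (simp add: ImO_scale onorm_B B_simps)
qed

lemma transP: assumes "L \<in> Dplus"
  shows "\<exists>h h'. h \<in> Sgrp \<and> h' \<in> Sgrp \<and> actL h L = cline zP \<and> actL h' (cline zP) = L"
proof -
  obtain z where z: "L = cline z" "z \<in> isocone" "Re (herm z z) > 0" using assms by (auto simp: Dplus_def)
  obtain u v where uv: "cline z = cline (u,v)" "u \<in> ImO" "v \<in> ImO" "B u v = 0" "onorm u = onorm v"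
    "onorm u = 1 \<or> onorm u = -1" "sgn (onorm u) = sgn (Re (herm z z))"
    using normalize[OF z(2)] z(3) by fastforce
  have "onorm u = 1" using uv(6,7) z(3) by auto
  then obtain h where h: "SI h" "h u = e1" "h v = e2" using redP[OF uv(2,3)] uv(4,5) by auto
  obtain h' where h': "h \<in> Sgrp" "h' \<in> Sgrp" "\<And>x. h' (h x) = x" using SI_D[OF h(1)] by blast
  have "actL h L = cline zP" using h by (simp add: z(1) uv(1) actL_cline Sgrp_linear[OF h'(1)] gg_def zP_def)
  moreover have "actL h' (cline zP) = L"
    using h h'(3) by (simp add: z(1) uv(1) actL_cline Sgrp_linear[OF h'(2)] gg_def zP_def[symmetric])
      (metis fst_conv snd_conv zP_def)
  ultimately show ?thesis using h' by blast
qed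

lemma transM: assumes "L \<in> Dminus"
  shows "\<exists>h h'. h \<in> Sgrp \<and> h' \<in> Sgrp \<and> actL h L = cline zM \<and> actL h' (cline zM) = L"
proof -
  obtain z where z: "L = cline z" "z \<in> isocone" "Re (herm z z) < 0" using assms by (auto simp: Dminus_def)
  obtain u v where uv: "cline z = cline (u,v)" "u \<in> ImO" "v \<in> ImO" "B u v = 0" "onorm u = onorm v"
    "onorm u = 1 \<or> onorm u = -1" "sgn (onorm u) = sgn (Re (herm z z))"
    using normalize[OF z(2)] z(3) by fastforce
  have "onorm u = -1" using uv(6,7) z(3) by auto
  then obtain h where h: "SI h" "h u = e4" "h v = e5" using redM[OF uv(2,3)] uv(4,5) by auto
  obtain h' where h': "h \<in> Sgrp" "h' \<in> Sgrp" "\<And>x. h' (h x) = x" using SI_D[OF h(1)] by blast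
  have "actL h L = cline zM" using h by (simp add: z(1) uv(1) actL_cline Sgrp_linear[OF h'(1)] gg_def zM_def)
  moreover have "actL h' (cline zM) = L"
    using h h'(3) by (simp add: z(1) uv(1) actL_cline Sgrp_linear[OF h'(2)] gg_def zM_def[symmetric])
      (metis fst_conv snd_conv zM_def)
  ultimately show ?thesis using h' by blast
qed

section \<open>Perturbation\<close>

lemma pos_orth: "\<exists>p. p \<in> ImO \<and> onorm p = 1 \<and> B p u = 0 \<and> B p v = 0"
proof -
  define xa :: "soct \<Rightarrow> real \<times> real \<times> real" where
    "xa = (\<lambda>x. (fst (snd (fst x)), fst (snd (snd (fst x))), snd (snd (snd (fst x)))))"
  have "dim {xa u, xa v} \<le> card {xa u, xa v}" by (rule dim_le_card') simp
  also have "\<dots> \<le> 2" by (simp add: card_insert_le_m1)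
  finally have "dim {xa u, xa v} < DIM(real \<times> real \<times> real)" by simp
  then obtain y where y: "y \<noteq> 0" "\<And>w. w \<in> span {xa u, xa v} \<Longrightarrow> orthogonal y w"
    using orthogonal_to_subspace_exists[OF \<open>dim {xa u, xa v} < DIM(real \<times> real \<times> real)\<close>] by blast
  have o: "y \<bullet> xa u = 0" "y \<bullet> xa v = 0" using y(2)[of "xa u"] y(2)[of "xa v"]
    by (auto simp: span_base orthogonal_def)
  obtain y1 y2 y3 where yy: "y = (y1,y2,y3)" by (cases y rule: prod.exhaust) (metis prod.exhaust)
  define n where "n = y1*y1 + y2*y2 + y3*y3"
  have sq: "y1*y1 \<ge> 0" "y2*y2 \<ge> 0" "y3*y3 \<ge> 0" by simp_all
  have npos: "n > 0"
  proof (rule ccontr)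
    assume "\<not> n > 0"
    hence "y1*y1 = 0" "y2*y2 = 0" "y3*y3 = 0" using sq unfolding n_def by linarith+
    hence "y = 0" by (simp add: yy zero_prod_def)
    thus False using y(1) by simp
  qed
  define p :: soct where "p = (1 / sqrt n) *\<^sub>R ((0,y1,y2,y3),(0,0,0,0))"
  have "p \<in> ImO" by (simp add: p_def ImO_coord)
  moreover have "onorm p = 1"
  proof -
    have "onorm ((0,y1,y2,y3),(0,0,0,0)) = n" by (simp add: onorm_coord n_def)
    hence "onorm p = (1 / sqrt n) * (1 / sqrt n) * n" unfolding p_def onorm_B B_simps by simp
    thus ?thesis using npos by simp
  qed
  moreover have "B ((0,y1,y2,y3),(0,0,0,0)) x = y \<bullet> xa x" for x
    by (cases x rule: soct_ex) (simp add: B_coord yy xa_def)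
  hence "B p u = 0" "B p v = 0" using o unfolding p_def B_scale_left by simp_all
  ultimately show ?thesis by blast
qed


lemma perturb_core:
  assumes uI: "u \<in> ImO" and vI: "v \<in> ImO" and nu: "onorm u = 0" and nv: "onorm v = 0"
    and uv: "B u v = 0" and u0: "u \<noteq> 0" and e: "e > 0"
  shows "\<exists>w \<in> isocone. dist w (u,v) < e \<and> Re (herm w w) \<noteq> 0"
proof -
  obtain p where p: "p \<in> ImO" "onorm p = 1" "B p u = 0" "B p v = 0" using pos_orth by blast
  define Ju where "Ju = (fst u, - snd u)"
  define m where "m = B u Ju"
  have m_eq: "m = fst u \<bullet> fst u + snd u \<bullet> snd u" by (simp add: m_def Ju_def B_inner)
  have mpos: "m > 0"
  proof -
    have "fst u \<noteq> 0 \<or> snd u \<noteq> 0" using u0 by (simp add: prod_eq_iff)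
    thus ?thesis unfolding m_eq
      by (metis add_pos_nonneg add_nonneg_pos inner_gt_zero_iff inner_ge_zero)
  qed
  have JuI: "Ju \<in> ImO" using uI by (simp add: Ju_def ImO_fst)
  define s where "s = Ju - B Ju p *\<^sub>R p"
  have sI: "s \<in> ImO" using JuI p(1) by (simp add: s_def ImO_diff ImO_scale)
  have us: "B u s = m" using p(3) by (simp add: s_def m_def B_simps B_sym[of u p])
  have ps: "B p s = 0" using p(2) by (simp add: s_def B_simps onorm_B B_sym[of p Ju])
  define sig where "sig = onorm s"
  define r where "r = s - (sig / (2*m)) *\<^sub>R u"
  have rI: "r \<in> ImO" using sI uI by (simp add: r_def ImO_diff ImO_scale)
  have ur: "B u r = m" using us nu by (simp add: r_def B_simps onorm_B)
  have pr: "B p r = 0" using ps p(3) by (simp add: r_def B_simps)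
  have nr: "onorm r = 0"
  proof -
    have "onorm r = sig - 2 * (sig / (2*m)) * m + (sig / (2*m)) * (sig / (2*m)) * onorm u"
      using us by (simp add: r_def onorm_B B_simps sig_def B_sym[of u s] algebra_simps)
    thus ?thesis using mpos nu by simp
  qed
  define n where "n = B v r"
  define D where "D = m*m + n*n"
  have Dpos: "D > 0" using mpos by (simp add: D_def add_pos_nonneg)
  define c1 where "c1 = m / (2*D)"
  define c2 where "c2 = - n / (2*D)"
  have fa: "B u u = 0" "B v v = 0" "B p p = 1" "B u p = 0" "B p u = 0" "B p v = 0" "B v p = 0"
    "B u r = m" "B r u = m" "B p r = 0" "B r p = 0" "B r r = 0" "B u v = 0" "B v u = 0" "B v r = n" "B r v = n"
    using nu nv p uv ur pr nr B_sym[of u p] B_sym[of p v] B_sym[of r u] B_sym[of r p] B_sym[of u v] B_sym[of r v]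
    by (simp_all add: onorm_B n_def)
  define w where "w = (\<lambda>t. (u + (t*t*c1) *\<^sub>R r, v + t *\<^sub>R p + (t*t*c2) *\<^sub>R r))"
  have Bf: "B (fst (w t)) (fst (w t)) = 2*t*t*c1*m" for t
    by (simp add: w_def B_simps fa algebra_simps)
  have Bs: "B (snd (w t)) (snd (w t)) = t*t + 2*t*t*c2*n" for t
    by (simp add: w_def B_simps fa algebra_simps)
  have Bfs: "B (fst (w t)) (snd (w t)) = t*t*(c2*m + c1*n)" for t
    by (simp add: w_def B_simps fa algebra_simps)
  have k1: "2*c1*m = m*m/D" "2*c2*n = - (n*n)/D" "c2*m + c1*n = 0" using Dpos
    by (simp_all add: c1_def c2_def field_simps)
  have "m*m/D + n*n/D = 1" using Dpos unfolding add_divide_distrib[symmetric] D_def[symmetric] by simp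
  hence k2: "1 - n*n/D = m*m/D" by linarith
  have iso: "onorm (fst (w t)) = onorm (snd (w t))" "B (fst (w t)) (snd (w t)) = 0" for t
  proof -
    have "onorm (fst (w t)) = t*t*(m*m/D)" using Bf k1 by (simp add: onorm_B algebra_simps)
    moreover have "onorm (snd (w t)) = t*t*(m*m/D)"
    proof -
      have "onorm (snd (w t)) = t*t*(1 + 2*c2*n)" using Bs by (simp add: onorm_B algebra_simps)
      also have "\<dots> = t*t*(m*m/D)" using k1(2) k2 by simp
      finally show ?thesis .
    qed
    ultimately show "onorm (fst (w t)) = onorm (snd (w t))" by simp
    show "B (fst (w t)) (snd (w t)) = 0" using Bfs k1 by simp
  qed
  have hw: "Re (herm (w t) (w t)) = 2*t*t*(m*m/D)" for t
  proof -
    have "onorm (fst (w t)) = t*t*(m*m/D)" using Bf k1 by (simp add: onorm_B algebra_simps)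
    thus ?thesis using iso(1)[of t] by (simp add: herm_self)
  qed
  have cw: "continuous_on UNIV w" unfolding w_def by (intro continuous_intros)
  have w0: "w 0 = (u,v)" by (simp add: w_def)
  have "isCont w 0" using cw by (simp add: continuous_on_eq_continuous_at)
  hence "(w \<longlongrightarrow> (u,v)) (at 0)" using w0 by (simp add: isCont_def)
  hence "eventually (\<lambda>t. dist (w t) (u,v) < e) (at 0)" using e by (rule tendstoD)
  then obtain d where d: "d > 0" "\<And>t. t \<noteq> 0 \<Longrightarrow> dist t 0 < d \<Longrightarrow> dist (w t) (u,v) < e"
    unfolding eventually_at by auto
  define t where "t = d / 2"
  have t0: "t \<noteq> 0" "dist t 0 < d" using d(1) by (simp_all add: t_def)
  have hne: "Re (herm (w t) (w t)) \<noteq> 0" using t0 mpos Dpos by (simp add: hw)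
  have "w t \<noteq> 0"
  proof
    assume "w t = 0"
    hence "Re (herm (w t) (w t)) = 0" by (simp add: herm_self onorm_B B_zero_left)
    thus False using hne by simp
  qed
  hence "w t \<in> isocone" using iso[of t] uI vI p(1) rI
    by (simp add: isocone_iff w_def ImO_add ImO_scale)
  thus ?thesis using d(2)[OF t0] hne by blast
qed


lemma perturb:
  assumes "z \<in> isocone" "Re (herm z z) = 0" "e > 0"
  shows "\<exists>w \<in> isocone. dist w z < e \<and> Re (herm w w) \<noteq> 0"
proof -
  obtain u v where z: "z = (u,v)" by (cases z rule: prod.exhaust)
  have uv: "u \<in> ImO" "v \<in> ImO" "onorm u = onorm v" "B u v = 0" "z \<noteq> 0"
    using assms(1) by (auto simp: isocone_iff z)
  have "onorm u + onorm v = 0" using assms(2) by (simp add: herm_self z)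
  hence n0: "onorm u = 0" "onorm v = 0" using uv(3) by simp_all
  show ?thesis
  proof (cases "u = 0")
    case False
    thus ?thesis using perturb_core[OF uv(1,2) n0 uv(4) False assms(3)] by (simp add: z)
  next
    case True
    hence v0: "v \<noteq> 0" using uv(5) unfolding z by (metis zero_prod_def)
    obtain w where w: "w \<in> isocone" "dist w (v,u) < e" "Re (herm w w) \<noteq> 0"
      using perturb_core[OF uv(2,1) n0(2,1) _ v0 assms(3)] uv(4) True by (auto simp: B_zero_left B_zero_right)
    obtain a b where wab: "w = (a,b)" by (cases w rule: prod.exhaust)
    have "(- b, a) \<in> isocone" using w(1) unfolding isocone_iff wab
      by (auto simp: ImO_minus onorm_B B_simps B_sym[of a b] prod_eq_iff)
    moreover have "dist (- b, a) z = dist w (v,u)"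
      using True by (simp add: z wab dist_norm norm_Pair add.commute)
    moreover have "Re (herm (- b, a) (- b, a)) = Re (herm w w)"
      by (simp add: herm_self wab onorm_B B_simps)
    ultimately show ?thesis using w(2,3) by metis
  qed
qed

section \<open>Preservation and openness\<close>

lemma Ogrp_Dplus: assumes "g \<in> Ogrp" "L \<in> Dplus" shows "actL g L \<in> Dplus"
proof -
  obtain z where z: "L = cline z" "z \<in> isocone" "Re (herm z z) > 0" using assms(2) by (auto simp: Dplus_def)
  have "actL g L = cline (gg g z)" using Ogrp_D(1)[OF assms(1)] by (simp add: z(1) actL_cline)
  moreover have "gg g z \<in> isocone" by (rule Ogrp_isocone[OF assms(1) z(2)])
  moreover have "Re (herm (gg g z) (gg g z)) > 0" using Ogrp_herm[OF assms(1)] z(3) by simp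
  ultimately show ?thesis unfolding Dplus_def by blast
qed

lemma Ogrp_Dminus: assumes "g \<in> Ogrp" "L \<in> Dminus" shows "actL g L \<in> Dminus"
proof -
  obtain z where z: "L = cline z" "z \<in> isocone" "Re (herm z z) < 0" using assms(2) by (auto simp: Dminus_def)
  have "actL g L = cline (gg g z)" using Ogrp_D(1)[OF assms(1)] by (simp add: z(1) actL_cline)
  moreover have "gg g z \<in> isocone" by (rule Ogrp_isocone[OF assms(1) z(2)])
  moreover have "Re (herm (gg g z) (gg g z)) < 0" using Ogrp_herm[OF assms(1)] z(3) by simp
  ultimately show ?thesis unfolding Dminus_def by blast
qed

lemma Sgrp_SOe: "Sgrp \<subseteq> SOe" and Sgrp_G0: "Sgrp \<subseteq> G0" by (auto simp: Sgrp_def)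

lemma transP2: assumes "L \<in> Dplus" "L' \<in> Dplus" shows "\<exists>g \<in> Sgrp. actL g L = L'"
proof -
  obtain h where h: "h \<in> Sgrp" "actL h L = cline zP" using transP[OF assms(1)] by blast
  obtain h' where h': "h' \<in> Sgrp" "actL h' (cline zP) = L'" using transP[OF assms(2)] by blast
  have "actL (h' \<circ> h) L = L'" using h h' by (simp add: actL_comp)
  thus ?thesis using Sgrp_comp[OF h'(1) h(1)] by blast
qed

lemma transM2: assumes "L \<in> Dminus" "L' \<in> Dminus" shows "\<exists>g \<in> Sgrp. actL g L = L'"
proof -
  obtain h where h: "h \<in> Sgrp" "actL h L = cline zM" using transM[OF assms(1)] by blast
  obtain h' where h': "h' \<in> Sgrp" "actL h' (cline zM) = L'" using transM[OF assms(2)] by blast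
  have "actL (h' \<circ> h) L = L'" using h h' by (simp add: actL_comp)
  thus ?thesis using Sgrp_comp[OF h'(1) h(1)] by blast
qed

lemma orbit_Dplus: assumes "L \<in> Dplus" shows "orbit SOe L = Dplus"
proof
  show "orbit SOe L \<subseteq> Dplus" using Ogrp_Dplus[OF _ assms] SOe_Ogrp by (auto simp: orbit_def)
  show "Dplus \<subseteq> orbit SOe L"
  proof
    fix L' assume "L' \<in> Dplus"
    then obtain g where "g \<in> Sgrp" "actL g L = L'" using transP2[OF assms] by blast
    thus "L' \<in> orbit SOe L" using Sgrp_SOe by (auto simp: orbit_def)
  qed
qed

lemma orbit_Dminus: assumes "L \<in> Dminus" shows "orbit SOe L = Dminus"
proof
  show "orbit SOe L \<subseteq> Dminus" using Ogrp_Dminus[OF _ assms] SOe_Ogrp by (auto simp: orbit_def)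
  show "Dminus \<subseteq> orbit SOe L"
  proof
    fix L' assume "L' \<in> Dminus"
    then obtain g where "g \<in> Sgrp" "actL g L = L'" using transM2[OF assms] by blast
    thus "L' \<in> orbit SOe L" using Sgrp_SOe by (auto simp: orbit_def)
  qed
qed

lemma cont_hermf: "continuous_on S (\<lambda>z::soct\<times>soct. Re (herm z z))"
  unfolding herm_self onorm_B B_inner by simp (intro continuous_intros)

lemma open_Dplus: "openZ Dplus"
proof -
  have "{z \<in> isocone. cline z \<in> Dplus} = isocone \<inter> (\<lambda>z. Re (herm z z)) -` {0<..}"
    using Dplus_iff by auto
  moreover have "openin (top_of_set isocone) (isocone \<inter> (\<lambda>z. Re (herm z z)) -` {0<..})"
    by (rule continuous_openin_preimage_gen[OF cont_hermf]) simp
  moreover have "Dplus \<subseteq> Zq" by (auto simp: Dplus_def Zq_def)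
  ultimately show ?thesis by (simp add: openZ_def)
qed

lemma open_Dminus: "openZ Dminus"
proof -
  have "{z \<in> isocone. cline z \<in> Dminus} = isocone \<inter> (\<lambda>z. Re (herm z z)) -` {..<0}"
    using Dminus_iff by auto
  moreover have "openin (top_of_set isocone) (isocone \<inter> (\<lambda>z. Re (herm z z)) -` {..<0})"
    by (rule continuous_openin_preimage_gen[OF cont_hermf]) simp
  moreover have "Dminus \<subseteq> Zq" by (auto simp: Dminus_def Zq_def)
  ultimately show ?thesis by (simp add: openZ_def)
qed

lemma not_open_orbit:
  assumes "z \<in> isocone" "Re (herm z z) = 0"
  shows "\<not> openZ (orbit SOe (cline z))"
proof
  assume op: "openZ (orbit SOe (cline z))"
  define U where "U = {w \<in> isocone. cline w \<in> orbit SOe (cline z)}"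
  have "openin (top_of_set isocone) U" using op by (simp add: openZ_def U_def)
  moreover have "z \<in> U" using assms(1) id_SOe unfolding U_def orbit_def
    by (auto intro!: exI[of _ id] simp: actL_def)
  ultimately obtain e where e: "e > 0" "\<And>w. w \<in> isocone \<Longrightarrow> dist w z < e \<Longrightarrow> w \<in> U"
    unfolding openin_euclidean_subtopology_iff by blast
  obtain w where w: "w \<in> isocone" "dist w z < e" "Re (herm w w) \<noteq> 0" using perturb[OF assms e(1)] by blast
  have "w \<in> U" using e(2) w(1,2) by blast
  then obtain g where g: "g \<in> SOe" "cline w = actL g (cline z)" by (auto simp: U_def orbit_def)
  have gO: "g \<in> Ogrp" using g(1) SOe_Ogrp by blast
  have "cline w = cline (gg g z)" using g(2) Ogrp_D(1)[OF gO] by (simp add: actL_cline)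
  moreover have "gg g z \<in> isocone" by (rule Ogrp_isocone[OF gO assms(1)])
  ultimately have "Re (herm w w) = 0 \<longleftrightarrow> Re (herm (gg g z) (gg g z)) = 0"
    using herm_cline(3)[OF w(1)] by blast
  thus False using w(3) Ogrp_herm[OF gO] assms(2) by simp
qed

theorem claim3p5:
  shows "Dplus \<noteq> Dminus
    \<and> Dplus \<in> orbitsZ SOe \<and> Dminus \<in> orbitsZ SOe
    \<and> (\<forall>Orb \<in> orbitsZ SOe. openZ Orb \<longleftrightarrow> Orb = Dplus \<or> Orb = Dminus)
    \<and> (\<forall>g \<in> G0. \<forall>L \<in> Dplus. actL g L \<in> Dplus)
    \<and> (\<forall>L \<in> Dplus. \<forall>L' \<in> Dplus. \<exists>g \<in> G0. actL g L = L')
    \<and> (\<forall>g \<in> G0. \<forall>L \<in> Dminus. actL g L \<in> Dminus)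
    \<and> (\<forall>L \<in> Dminus. \<forall>L' \<in> Dminus. \<exists>g \<in> G0. actL g L = L')"
proof (intro conjI)
  have P: "cline zP \<in> Dplus" "cline zP \<in> Zq" using zP_iso unfolding Dplus_def Zq_def by blast+
  have M: "cline zM \<in> Dminus" "cline zM \<in> Zq" using zM_iso unfolding Dminus_def Zq_def by blast+
  have "cline zP \<notin> Dminus" using Dminus_iff[OF zP_iso(1)] zP_iso(2) by simp
  thus "Dplus \<noteq> Dminus" using P by blast
  show "Dplus \<in> orbitsZ SOe" using orbit_Dplus[OF P(1)] P(2) unfolding orbitsZ_def by (metis image_eqI)
  show "Dminus \<in> orbitsZ SOe" using orbit_Dminus[OF M(1)] M(2) unfolding orbitsZ_def by (metis image_eqI)
  show "\<forall>Orb \<in> orbitsZ SOe. openZ Orb \<longleftrightarrow> Orb = Dplus \<or> Orb = Dminus"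
  proof
    fix Orb assume "Orb \<in> orbitsZ SOe"
    then obtain z where z: "z \<in> isocone" "Orb = orbit SOe (cline z)" by (auto simp: orbitsZ_def Zq_def)
    consider "Re (herm z z) > 0" | "Re (herm z z) < 0" | "Re (herm z z) = 0" by linarith
    thus "openZ Orb \<longleftrightarrow> Orb = Dplus \<or> Orb = Dminus"
    proof cases
      case 1
      hence "Orb = Dplus" using z Dplus_iff orbit_Dplus by auto
      thus ?thesis using open_Dplus by simp
    next
      case 2
      hence "Orb = Dminus" using z Dminus_iff orbit_Dminus by auto
      thus ?thesis using open_Dminus by simp
    next
      case 3
      have "cline z \<in> Orb" using z id_SOe unfolding orbit_def
        by (auto intro!: exI[of _ id] simp: actL_def)
      moreover have "cline z \<notin> Dplus" "cline z \<notin> Dminus" using Dplus_iff[OF z(1)] Dminus_iff[OF z(1)] 3 by auto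
      ultimately have "Orb \<noteq> Dplus" "Orb \<noteq> Dminus" by auto
      moreover have "\<not> openZ Orb" using not_open_orbit[OF z(1) 3] z(2) by simp
      ultimately show ?thesis by simp
    qed
  qed
  show "\<forall>g \<in> G0. \<forall>L \<in> Dplus. actL g L \<in> Dplus" using Ogrp_Dplus G0_Ogrp by blast
  show "\<forall>g \<in> G0. \<forall>L \<in> Dminus. actL g L \<in> Dminus" using Ogrp_Dminus G0_Ogrp by blast
  show "\<forall>L \<in> Dplus. \<forall>L' \<in> Dplus. \<exists>g \<in> G0. actL g L = L'" using transP2 Sgrp_G0 by blast
  show "\<forall>L \<in> Dminus. \<forall>L' \<in> Dminus. \<exists>g \<in> G0. actL g L = L'" using transM2 Sgrp_G0 by blast
qed

end
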